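(* Let $\sigma:\mathcal{A}^*\to\mathcal{B}^*$ be an injective and strongly left proper morphism. The following are equivalent: (1) the sets $\mathcal{T}^-(\sigma)$ and $\mathcal{T}^+(\sigma)$ each contain exactly one element; (2) for every shift space $X$ over $\mathcal{A}$ and every dendric bispecial factor $v\in\mathcal{L}(X)$, $\sigma$ is dendric preserving for $v$.
   Context: A shift space over $\mathcal{A}$ is a closed shift-invariant $X\subseteq\mathcal{A}^{\mathbb{Z}}$ in which all letters occur, with factor set $\mathcal{L}(X)$. For $w\in\mathcal{L}(X)$: $E^-_X(w)=\{a:aw\in\mathcal{L}(X)\}$, $E^+_X(w)=\{b:wb\in\mathcal{L}(X)\}$, $E_X(w)=\{(a,b):awb\in\mathcal{L}(X)\}$; $\mathcal{E}_X(w)$ is the bipartite graph with left vertices $E^-_X(w)$, right vertices $E^+_X(w)$ and edges $E_X(w)$; $w$ is bispecial if $\#E^\pm_X(w)\ge2$, dendric if $\mathcal{E}_X(w)$ is a tree. Morphisms are non-erasing; $\sigma$ is strongly left proper with first letter $\ell$ if every $\sigma(a)$ begins with $\ell$ and contains $\ell$ exactly once. Image of $X$: $Y=\{S^k\sigma(x):x\in X,0\le k<|\sigma(x_0)|\}$. For non-empty $u\in\mathcal{L}(Y)$ containing $\ell$ there is a unique triple $(s,v,p)$, $v\in\mathcal{L}(X)$, $u=s\sigma(v)p$, with $s$ a proper suffix of $\sigma(a)$, $p$ a non-empty prefix of $\sigma(b)$ for some $(a,b)\in E_X(v)$; $u$ is then an extended image of $v$. $\sigma$ is dendric preserving for $v$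 if every bispecial extended image of $v$ is dendric in $Y$. $\mathcal{T}^-(\sigma)=\{s(a_1,a_2):a_1,a_2\in\mathcal{A},a_1\ne a_2\}$ and $\mathcal{T}^+(\sigma)=\{p(b_1,b_2):b_1\ne b_2\}$, where $s(a_1,a_2)$ (resp. $p(b_1,b_2)$) is the longest common suffix of $\sigma(a_1),\sigma(a_2)$ (resp. longest common prefix of $\sigma(b_1),\sigma(b_2)$). *)

theory Defs
  imports "HOL-Analysis.Analysis" "HOL-Library.Sublist"
begin

definition morph :: "('a \<Rightarrow> 'b list) \<Rightarrow> 'a list \<Rightarrow> 'b list" where
  "morph \<sigma> w = concat (map \<sigma> w)"

definition is_morphism :: "'a set \<Rightarrow> 'b set \<Rightarrow> ('a \<Rightarrow> 'b list) \<Rightarrow> bool" where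
  "is_morphism A B \<sigma> \<longleftrightarrow> (\<forall>a\<in>A. \<sigma> a \<in> lists B \<and> \<sigma> a \<noteq> [])"

definition injective_morphism :: "'a set \<Rightarrow> ('a \<Rightarrow> 'b list) \<Rightarrow> bool" where
  "injective_morphism A \<sigma> \<longleftrightarrow> inj_on (morph \<sigma>) (lists A)"

definition strongly_left_proper :: "'a set \<Rightarrow> ('a \<Rightarrow> 'b list) \<Rightarrow> 'b \<Rightarrow> bool" where
  "strongly_left_proper A \<sigma> l \<longleftrightarrow>
     (\<forall>a\<in>A. \<sigma> a \<noteq> [] \<and> hd (\<sigma> a) = l \<and> count_list (\<sigma> a) l = 1)"

definition longest_common_suffix :: "'a list \<Rightarrow> 'a list \<Rightarrow> 'a list" where
  "longest_common_suffix xs ys = rev (longest_common_prefix (rev xs) (rev ys))"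

definition Tminus :: "'a set \<Rightarrow> ('a \<Rightarrow> 'b list) \<Rightarrow> 'b list set" where
  "Tminus A \<sigma> = {longest_common_suffix (\<sigma> a1) (\<sigma> a2) | a1 a2. a1 \<in> A \<and> a2 \<in> A \<and> a1 \<noteq> a2}"

definition Tplus :: "'a set \<Rightarrow> ('a \<Rightarrow> 'b list) \<Rightarrow> 'b list set" where
  "Tplus A \<sigma> = {longest_common_prefix (\<sigma> b1) (\<sigma> b2) | b1 b2. b1 \<in> A \<and> b2 \<in> A \<and> b1 \<noteq> b2}"

definition shift :: "(int \<Rightarrow> 'a) \<Rightarrow> int \<Rightarrow> 'a" where
  "shift x = (\<lambda>i. x (i + 1))"

definition shift_space :: "'a set \<Rightarrow> (int \<Rightarrow> 'a) set \<Rightarrow> bool" where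
  "shift_space A X \<longleftrightarrow>
     X \<subseteq> (UNIV \<rightarrow> A) \<and>
     closedin (product_topology (\<lambda>_::int. discrete_topology A) UNIV) X \<and>
     shift ` X = X \<and>
     (\<forall>a\<in>A. \<exists>x\<in>X. \<exists>i. x i = a)"

definition lang :: "(int \<Rightarrow> 'a) set \<Rightarrow> 'a list set" where
  "lang X = {w. \<exists>x\<in>X. \<exists>i::int. w = map (\<lambda>j. x (i + int j)) [0..<length w]}"

text \<open>Image of a bi-infinite sequence under a non-erasing morphism, with sigma(x_0) starting
  at position 0.\<close>
definition spos :: "('a \<Rightarrow> 'b list) \<Rightarrow> (int \<Rightarrow> 'a) \<Rightarrow> int \<Rightarrow> int" where
  "spos \<sigma> x n = (if n \<ge> 0 then int (\<Sum>i\<in>{0..<n}. length (\<sigma> (x i)))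
                  else - int (\<Sum>i\<in>{n..<0}. length (\<sigma> (x i))))"

definition seq_image :: "('a \<Rightarrow> 'b list) \<Rightarrow> (int \<Rightarrow> 'a) \<Rightarrow> int \<Rightarrow> 'b" where
  "seq_image \<sigma> x m =
     (let n = (THE n. spos \<sigma> x n \<le> m \<and> m < spos \<sigma> x (n + 1))
      in \<sigma> (x n) ! nat (m - spos \<sigma> x n))"

definition shift_image :: "('a \<Rightarrow> 'b list) \<Rightarrow> (int \<Rightarrow> 'a) set \<Rightarrow> (int \<Rightarrow> 'b) set" where
  "shift_image \<sigma> X = {(\<lambda>i. seq_image \<sigma> x (i + int k)) | x k. x \<in> X \<and> k < length (\<sigma> (x 0))}"

definition Eminus :: "(int \<Rightarrow> 'a) set \<Rightarrow> 'a list \<Rightarrow> 'a set" where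
  "Eminus X w = {a. a # w \<in> lang X}"

definition Eplus :: "(int \<Rightarrow> 'a) set \<Rightarrow> 'a list \<Rightarrow> 'a set" where
  "Eplus X w = {b. w @ [b] \<in> lang X}"

definition Ext :: "(int \<Rightarrow> 'a) set \<Rightarrow> 'a list \<Rightarrow> ('a \<times> 'a) set" where
  "Ext X w = {(a, b). a # w @ [b] \<in> lang X}"

definition graph_connected :: "'v set \<Rightarrow> ('v \<Rightarrow> 'v \<Rightarrow> bool) \<Rightarrow> bool" where
  "graph_connected V E \<longleftrightarrow> V \<noteq> {} \<and>
     (\<forall>x\<in>V. \<forall>y\<in>V. (x, y) \<in> {(u, v). u \<in> V \<and> v \<in> V \<and> E u v}\<^sup>*)"

definition graph_acyclic :: "'v set \<Rightarrow> ('v \<Rightarrow> 'v \<Rightarrow> bool) \<Rightarrow> bool" where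
  "graph_acyclic V E \<longleftrightarrow>
     \<not> (\<exists>cs. length cs \<ge> 3 \<and> distinct cs \<and> set cs \<subseteq> V \<and>
            (\<forall>i < length cs. E (cs ! i) (cs ! ((i + 1) mod length cs))))"

definition is_tree :: "'v set \<Rightarrow> ('v \<Rightarrow> 'v \<Rightarrow> bool) \<Rightarrow> bool" where
  "is_tree V E \<longleftrightarrow> graph_connected V E \<and> graph_acyclic V E"

text \<open>Extension graph: bipartite, left copy of E^-, right copy of E^+, edges from E(w).\<close>
definition ext_graph_vertices :: "(int \<Rightarrow> 'a) set \<Rightarrow> 'a list \<Rightarrow> ('a + 'a) set" where
  "ext_graph_vertices X w = Inl ` Eminus X w \<union> Inr ` Eplus X w"

definition ext_graph_adj :: "(int \<Rightarrow> 'a) set \<Rightarrow> 'a list \<Rightarrow> ('a + 'a) \<Rightarrow> ('a + 'a) \<Rightarrow> bool" where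
  "ext_graph_adj X w u v \<longleftrightarrow>
     (\<exists>a b. (a, b) \<in> Ext X w \<and> ((u = Inl a \<and> v = Inr b) \<or> (u = Inr b \<and> v = Inl a)))"

definition bispecial :: "(int \<Rightarrow> 'a) set \<Rightarrow> 'a list \<Rightarrow> bool" where
  "bispecial X w \<longleftrightarrow> w \<in> lang X \<and> card (Eminus X w) \<ge> 2 \<and> card (Eplus X w) \<ge> 2"

definition dendric :: "(int \<Rightarrow> 'a) set \<Rightarrow> 'a list \<Rightarrow> bool" where
  "dendric X w \<longleftrightarrow> w \<in> lang X \<and> is_tree (ext_graph_vertices X w) (ext_graph_adj X w)"

definition extended_image ::
  "('a \<Rightarrow> 'b list) \<Rightarrow> 'b \<Rightarrow> (int \<Rightarrow> 'a) set \<Rightarrow> 'b list \<Rightarrow> 'a list \<Rightarrow> bool" where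
  "extended_image \<sigma> l X u v \<longleftrightarrow>
     u \<in> lang (shift_image \<sigma> X) \<and> u \<noteq> [] \<and> l \<in> set u \<and> v \<in> lang X \<and>
     (\<exists>s p a b. (a, b) \<in> Ext X v \<and> strict_suffix s (\<sigma> a) \<and> p \<noteq> [] \<and> prefix p (\<sigma> b) \<and>
                u = s @ morph \<sigma> v @ p)"

definition dendric_preserving ::
  "('a \<Rightarrow> 'b list) \<Rightarrow> 'b \<Rightarrow> (int \<Rightarrow> 'a) set \<Rightarrow> 'a list \<Rightarrow> bool" where
  "dendric_preserving \<sigma> l X v \<longleftrightarrow>
     (\<forall>u. extended_image \<sigma> l X u v \<and> bispecial (shift_image \<sigma> X) u
          \<longrightarrow> dendric (shift_image \<sigma> X) u)"

end

theory Submission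
  imports Defs
begin


lemma strict_prefix_nth_snoc:
  assumes "strict_prefix t xs" shows "prefix (t @ [xs ! length t]) xs"
proof -
  from assms obtain r where r: "xs = t @ r" "r \<noteq> []"
    by (metis append_Nil2 prefix_def strict_prefix_def)
  then obtain c r' where "r = c # r'" by (cases r) auto
  with r show ?thesis by (auto simp: prefix_def)
qed

lemma lcp_next_differ:
  assumes "strict_prefix (longest_common_prefix xs ys) xs"
      and "strict_prefix (longest_common_prefix xs ys) ys"
  shows "xs ! length (longest_common_prefix xs ys) \<noteq> ys ! length (longest_common_prefix xs ys)"
proof
  let ?t = "longest_common_prefix xs ys"
  assume eq: "xs ! length ?t = ys ! length ?t"
  have "prefix (?t @ [xs ! length ?t]) xs" using assms(1) by (rule strict_prefix_nth_snoc)
  moreover have "prefix (?t @ [xs ! length ?t]) ys" using strict_prefix_nth_snoc[OF assms(2)] eq by simp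
  ultimately have "prefix (?t @ [xs ! length ?t]) ?t"
    by (rule longest_common_prefix_max_prefix)
  then show False by (auto dest: prefix_length_le)
qed

lemma prefix_nth: "prefix t xs \<Longrightarrow> i < length t \<Longrightarrow> xs ! i = t ! i"
  by (auto simp: prefix_def nth_append)

definition Tset :: "'a set \<Rightarrow> ('a \<Rightarrow> 'b list) \<Rightarrow> 'b list set" where
  "Tset A f = {longest_common_prefix (f a1) (f a2) | a1 a2. a1 \<in> A \<and> a2 \<in> A \<and> a1 \<noteq> a2}"

locale trie =
  fixes A :: "'a set" and f :: "'a \<Rightarrow> 'b list"
  assumes H: "\<And>a1 a2. a1 \<in> A \<Longrightarrow> a2 \<in> A \<Longrightarrow> a1 \<noteq> a2 \<Longrightarrow> \<not> prefix (f a1) (f a2)"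
begin

lemma lcp_strict1:
  assumes "a1 \<in> A" "a2 \<in> A" "a1 \<noteq> a2"
  shows "strict_prefix (longest_common_prefix (f a1) (f a2)) (f a1)"
  using H[OF assms] longest_common_prefix_prefix1[of "f a1" "f a2"] longest_common_prefix_prefix2[of "f a1" "f a2"]
  by (metis strict_prefix_def)

lemma lcp_strict2:
  assumes "a1 \<in> A" "a2 \<in> A" "a1 \<noteq> a2"
  shows "strict_prefix (longest_common_prefix (f a1) (f a2)) (f a2)"
  using H[OF assms(2,1)] assms(3) longest_common_prefix_prefix1[of "f a1" "f a2"] longest_common_prefix_prefix2[of "f a1" "f a2"]
  by (metis strict_prefix_def)

lemma G3:
  assumes "a1 \<in> A" "a2 \<in> A" "a1 \<noteq> a2"
  shows "f a1 ! length (longest_common_prefix (f a1) (f a2)) \<noteq> f a2 ! length (longest_common_prefix (f a1) (f a2))"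
  by (rule lcp_next_differ[OF lcp_strict1[OF assms] lcp_strict2[OF assms]])

lemma G1:
  assumes T1: "card (Tset A f) = 1"
    and a: "a1 \<in> A" "a2 \<in> A" "strict_prefix q (f a1)" "strict_prefix q (f a2)"
    and h: "f a1 ! length q \<noteq> f a2 ! length q"
  shows "(\<forall>a\<in>A. strict_prefix q (f a)) \<and> inj_on (\<lambda>a. f a ! length q) A"
proof -
  have ne: "a1 \<noteq> a2" using h by auto
  let ?t = "longest_common_prefix (f a1) (f a2)"
  have tT: "?t \<in> Tset A f" using a ne unfolding Tset_def by blast
  from T1 obtain t where Tt: "Tset A f = {t}" by (meson card_1_singletonE)
  have all: "\<And>b1 b2. b1 \<in> A \<Longrightarrow> b2 \<in> A \<Longrightarrow> b1 \<noteq> b2 \<Longrightarrow> longest_common_prefix (f b1) (f b2) = ?t"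
  proof -
    fix b1 b2 assume "b1 \<in> A" "b2 \<in> A" "b1 \<noteq> b2"
    then have "longest_common_prefix (f b1) (f b2) \<in> Tset A f" unfolding Tset_def by blast
    then show "longest_common_prefix (f b1) (f b2) = ?t" using tT Tt by simp
  qed
  have qt: "prefix q ?t"
    using a(3,4) by (simp add: longest_common_prefix_max_prefix prefix_order.less_imp_le)
  have "q = ?t"
  proof (rule ccontr)
    assume "q \<noteq> ?t"
    then have sq: "strict_prefix q ?t" using qt by (simp add: strict_prefix_def)
    then have l: "length q < length ?t" by (rule prefix_length_less)
    have "f a1 ! length q = ?t ! length q"
      using longest_common_prefix_prefix1[of "f a1" "f a2"] l by (rule prefix_nth)
    moreover have "f a2 ! length q = ?t ! length q"
      using longest_common_prefix_prefix2[of "f a1" "f a2"] l by (rule prefix_nth)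
    ultimately show False using h by simp
  qed
  have sp: "\<forall>a\<in>A. strict_prefix q (f a)"
  proof
    fix a assume aA: "a \<in> A"
    obtain a' where a': "a' \<in> A" "a' \<noteq> a" using a ne by blast
    show "strict_prefix q (f a)" using lcp_strict1[OF aA a'(1) a'(2)[symmetric]] all[OF aA a'(1) a'(2)[symmetric]] \<open>q = ?t\<close>
      by simp
  qed
  have "inj_on (\<lambda>a. f a ! length q) A"
  proof (rule inj_onI, rule ccontr)
    fix b1 b2 assume b: "b1 \<in> A" "b2 \<in> A" "f b1 ! length q = f b2 ! length q" "b1 \<noteq> b2"
    then show False using G3[OF b(1,2,4)] all[OF b(1,2,4)] \<open>q = ?t\<close> by simp
  qed
  with sp show ?thesis by blast
qed

lemma G2:
  assumes fin: "finite A" and cA: "card A \<ge> 2" and T1: "card (Tset A f) \<noteq> 1"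
  shows "\<exists>q a1 a2 a3. q \<in> Tset A f \<and> a1 \<in> A \<and> a2 \<in> A \<and> a3 \<in> A \<and> a1 \<noteq> a2 \<and>
     strict_prefix q (f a1) \<and> strict_prefix q (f a2) \<and> strict_prefix q (f a3) \<and>
     f a1 ! length q = f a2 ! length q \<and> f a1 ! length q \<noteq> f a3 ! length q"
proof -
  have finT: "finite (Tset A f)"
  proof -
    have "Tset A f \<subseteq> (\<lambda>(a1,a2). longest_common_prefix (f a1) (f a2)) ` (A \<times> A)"
      unfolding Tset_def by auto
    then show ?thesis using fin by (meson finite_SigmaI finite_imageI finite_subset)
  qed
  obtain x0 y0 where xy0: "x0 \<in> A" "y0 \<in> A" "x0 \<noteq> y0"
  proof -
    obtain B where "B \<subseteq> A" "card B = 2" using cA obtain_subset_with_card_n by metis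
    then show ?thesis using that unfolding card_2_iff by blast
  qed
  then have Tne: "Tset A f \<noteq> {}" unfolding Tset_def by blast
  have "finite (length ` Tset A f)" "length ` Tset A f \<noteq> {}" using finT Tne by auto
  then have "Min (length ` Tset A f) \<in> length ` Tset A f" by (rule Min_in)
  then obtain t0 where t0T: "t0 \<in> Tset A f" and t0m: "length t0 = Min (length ` Tset A f)" by auto
  have t0min: "\<And>t'. t' \<in> Tset A f \<Longrightarrow> length t0 \<le> length t'"
    using t0m finT by simp
  have "\<exists>t1\<in>Tset A f. t1 \<noteq> t0"
  proof (rule ccontr)
    assume "\<not> ?thesis"
    then have "Tset A f = {t0}" using t0T by blast
    then show False using T1 by simp
  qed
  then obtain t1 where t1T: "t1 \<in> Tset A f" and t10: "t1 \<noteq> t0" by blast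
  from t0T obtain x y where xy: "x \<in> A" "y \<in> A" "x \<noteq> y" "t0 = longest_common_prefix (f x) (f y)"
    unfolding Tset_def by blast
  from t1T obtain a1 a2 where a12: "a1 \<in> A" "a2 \<in> A" "a1 \<noteq> a2" "t1 = longest_common_prefix (f a1) (f a2)"
    unfolding Tset_def by blast
  have pz: "prefix t0 (f z)" if z: "z \<in> A" for z
  proof (cases "z = x")
    case True then show ?thesis using xy(4) longest_common_prefix_prefix1 by metis
  next
    case False
    let ?s = "longest_common_prefix (f x) (f z)"
    have "?s \<in> Tset A f" using xy z False unfolding Tset_def by blast
    then have "length t0 \<le> length ?s" by (rule t0min)
    then have "prefix t0 ?s" using prefix_length_prefix xy(4) longest_common_prefix_prefix1 by metis
    then show ?thesis using longest_common_prefix_prefix2 prefix_order.trans by metis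
  qed
  have "prefix t0 t1" using a12(4) pz[OF a12(1)] pz[OF a12(2)] longest_common_prefix_max_prefix by metis
  then have st: "strict_prefix t0 t1" using t10 by (simp add: strict_prefix_def)
  then have lt: "length t0 < length t1"
    by (rule prefix_length_less)
  have p1: "prefix t1 (f a1)" "prefix t1 (f a2)" using a12(4) longest_common_prefix_prefix1 longest_common_prefix_prefix2 by metis+
  have s1: "strict_prefix t0 (f a1)" "strict_prefix t0 (f a2)" using st p1 prefix_order.less_le_trans by blast+
  have h12: "f a1 ! length t0 = f a2 ! length t0"
    using prefix_nth[OF p1(1) lt] prefix_nth[OF p1(2) lt] by simp
  have sx: "strict_prefix t0 (f x)" "strict_prefix t0 (f y)"
    using lcp_strict1[OF xy(1-3)] lcp_strict2[OF xy(1-3)] xy(4) by simp_all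
  have hxy: "f x ! length t0 \<noteq> f y ! length t0" using G3[OF xy(1-3)] xy(4) by simp
  show ?thesis
  proof (cases "f x ! length t0 \<noteq> f a1 ! length t0")
    case True
    show ?thesis
      apply (rule exI[of _ t0], rule exI[of _ a1], rule exI[of _ a2], rule exI[of _ x])
      using t0T a12 s1 sx h12 xy True by simp
  next
    case False
    show ?thesis
      apply (rule exI[of _ t0], rule exI[of _ a1], rule exI[of _ a2], rule exI[of _ y])
      using t0T a12 s1 sx h12 xy hxy False by simp
  qed
qed

end



section \<open>Morphisms and positions\<close>

lemma morph_Nil[simp]: "morph \<sigma> [] = []" by (simp add: morph_def)
lemma morph_Cons[simp]: "morph \<sigma> (a # w) = \<sigma> a @ morph \<sigma> w" by (simp add: morph_def)
lemma morph_append[simp]: "morph \<sigma> (v @ w) = morph \<sigma> v @ morph \<sigma> w" by (simp add: morph_def)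

lemma length_morph_ge:
  assumes "\<forall>a\<in>set w. \<sigma> a \<noteq> []" shows "length w \<le> length (morph \<sigma> w)"
  using assms by (induction w) (auto simp: Suc_le_eq, metis add_le_same_cancel2 le_trans length_greater_0_conv not_le)

definition blk :: "(int \<Rightarrow> 'a) \<Rightarrow> int \<Rightarrow> nat \<Rightarrow> 'a list" where
  "blk x n K = map (\<lambda>i. x (n + int i)) [0..<K]"

lemma length_blk[simp]: "length (blk x n K) = K" by (simp add: blk_def)

lemma blk_0[simp]: "blk x n 0 = []" by (simp add: blk_def)

lemma blk_Suc: "blk x n (Suc K) = x n # blk x (n + 1) K"
proof -
  have "[0..<Suc K] = 0 # map Suc [0..<K]" by (simp add: upt_conv_Cons map_Suc_upt)
  then show ?thesis by (simp add: blk_def add.assoc)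
qed

lemma blk_add: "blk x n (K + M) = blk x n K @ blk x (n + int K) M"
proof (induction K arbitrary: n)
  case 0 then show ?case by simp
next
  case (Suc K)
  show ?case using Suc[of "n+1"] by (simp add: blk_Suc add.commute add.left_commute)
qed

lemma nth_blk: "j < K \<Longrightarrow> blk x n K ! j = x (n + int j)" by (simp add: blk_def)

lemma set_blk: "set (blk x n K) = (\<lambda>i. x (n + int i)) ` {0..<K}" by (simp add: blk_def)

lemma spos_step: "spos \<sigma> x (n + 1) = spos \<sigma> x n + int (length (\<sigma> (x n)))"
proof -
  consider "n \<ge> 0" | "n = -1" | "n < -1" by linarith
  then show ?thesis
  proof cases
    case 1
    have "{0..<n+1} = insert n {0..<n}" using 1 by auto
    then show ?thesis using 1 by (simp add: spos_def)
  next
    case 2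
    have "{-1..<0::int} = {-1}" by auto
    then show ?thesis using 2 by (simp add: spos_def)
  next
    case 3
    have "{n..<0} = insert n {n+1..<0}" using 3 by auto
    then show ?thesis using 3 by (simp add: spos_def)
  qed
qed

lemma spos_blk: "spos \<sigma> x (n + int K) = spos \<sigma> x n + int (length (morph \<sigma> (blk x n K)))"
proof (induction K arbitrary: n)
  case 0 then show ?case by simp
next
  case (Suc K)
  have "spos \<sigma> x (n + int (Suc K)) = spos \<sigma> x ((n + 1) + int K)" by (simp add: add.assoc)
  also have "\<dots> = spos \<sigma> x (n+1) + int (length (morph \<sigma> (blk x (n+1) K)))" by (rule Suc)
  finally show ?case by (simp add: blk_Suc spos_step)
qed

locale nonerasing_seq =
  fixes \<sigma> :: "'a \<Rightarrow> 'b list" and x :: "int \<Rightarrow> 'a"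
  assumes ne: "\<And>i. \<sigma> (x i) \<noteq> []"
begin

lemma spos_less: assumes "n < n'" shows "spos \<sigma> x n < spos \<sigma> x n'"
proof -
  obtain K where K: "n' = n + int K" "K > 0" using assms by (metis zless_iff_Suc_zadd zero_less_Suc)
  have "K \<le> length (morph \<sigma> (blk x n K))"
    using length_morph_ge[of "blk x n K" \<sigma>] ne by (auto simp: set_blk)
  then have "morph \<sigma> (blk x n K) \<noteq> []" using K(2) by (metis le_zero_eq list.size(3) not_gr0)
  then show ?thesis using K(1) spos_blk[of \<sigma> x n K] by simp
qed

lemma spos_le: "n \<le> n' \<Longrightarrow> spos \<sigma> x n \<le> spos \<sigma> x n'"
  using spos_less by (cases "n = n'") (auto simp: order_le_less)

lemma spos_exists: "\<exists>n. spos \<sigma> x n \<le> m \<and> m < spos \<sigma> x (n + 1)"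
proof (induction m rule: int_induct[where k = 0])
  case base
  have "spos \<sigma> x 0 = 0" by (simp add: spos_def)
  moreover have "spos \<sigma> x 0 < spos \<sigma> x (0 + 1)" by (rule spos_less) simp
  ultimately show ?case by (metis order_refl)
next
  case (step1 i)
  then obtain n where n: "spos \<sigma> x n \<le> i" "i < spos \<sigma> x (n + 1)" by blast
  show ?case
  proof (cases "i + 1 < spos \<sigma> x (n + 1)")
    case True then show ?thesis using n by (intro exI[of _ n]) auto
  next
    case False
    then have "i + 1 = spos \<sigma> x (n + 1)" using n by simp
    moreover have "spos \<sigma> x (n + 1) < spos \<sigma> x (n + 1 + 1)" by (rule spos_less) simp
    ultimately show ?thesis by (metis order_refl)
  qed
next
  case (step2 i)
  then obtain n where n: "spos \<sigma> x n \<le> i" "i < spos \<sigma> x (n + 1)" by blast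
  show ?case
  proof (cases "spos \<sigma> x n \<le> i - 1")
    case True then show ?thesis using n by auto
  next
    case False
    then have "i = spos \<sigma> x n" using n by simp
    moreover have "spos \<sigma> x (n - 1) < spos \<sigma> x n" by (rule spos_less) simp
    ultimately show ?thesis by (intro exI[of _ "n - 1"]) simp
  qed
qed

lemma spos_unique:
  assumes "spos \<sigma> x n \<le> m" "m < spos \<sigma> x (n + 1)" "spos \<sigma> x n' \<le> m" "m < spos \<sigma> x (n' + 1)"
  shows "n = n'"
proof (rule ccontr)
  assume "n \<noteq> n'"
  then consider "n + 1 \<le> n'" | "n' + 1 \<le> n" by linarith
  then show False
  proof cases
    case 1 then show False using spos_le[OF 1] assms by linarith
  next
    case 2 then show False using spos_le[OF 2] assms by linarith
  qed
qed

lemma seq_image_at: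
  assumes "j < length (\<sigma> (x n))"
  shows "seq_image \<sigma> x (spos \<sigma> x n + int j) = \<sigma> (x n) ! j"
proof -
  let ?m = "spos \<sigma> x n + int j"
  have c: "spos \<sigma> x n \<le> ?m \<and> ?m < spos \<sigma> x (n + 1)" using assms spos_step[of \<sigma> x n] by simp
  have "(THE n'. spos \<sigma> x n' \<le> ?m \<and> ?m < spos \<sigma> x (n' + 1)) = n"
    using c spos_unique by (intro the_equality) blast+
  then show ?thesis unfolding seq_image_def Let_def by simp
qed

lemma seq_image_blk:
  assumes "j < length (morph \<sigma> (blk x n K))"
  shows "seq_image \<sigma> x (spos \<sigma> x n + int j) = morph \<sigma> (blk x n K) ! j"
  using assms
proof (induction K arbitrary: n j)
  case 0 then show ?case by simp
next
  case (Suc K)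
  show ?case
  proof (cases "j < length (\<sigma> (x n))")
    case True
    then show ?thesis using seq_image_at[OF True] by (simp add: blk_Suc nth_append)
  next
    case False
    define j' where "j' = j - length (\<sigma> (x n))"
    have j: "j = length (\<sigma> (x n)) + j'" using False j'_def by simp
    have "j' < length (morph \<sigma> (blk x (n+1) K))" using Suc.prems j by (simp add: blk_Suc)
    then have "seq_image \<sigma> x (spos \<sigma> x (n+1) + int j') = morph \<sigma> (blk x (n+1) K) ! j'" by (rule Suc.IH)
    moreover have "spos \<sigma> x (n+1) + int j' = spos \<sigma> x n + int j" using j spos_step[of \<sigma> x n] by simp
    ultimately show ?thesis using j by (simp add: blk_Suc nth_append)
  qed
qed

lemma seq_image_in:
  "\<exists>n j. j < length (\<sigma> (x n)) \<and> q = spos \<sigma> x n + int j \<and> seq_image \<sigma> x q = \<sigma> (x n) ! j"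
proof -
  obtain n where n: "spos \<sigma> x n \<le> q" "q < spos \<sigma> x (n + 1)" using spos_exists by blast
  define j where "j = nat (q - spos \<sigma> x n)"
  have q: "q = spos \<sigma> x n + int j" using n j_def by simp
  have jl: "j < length (\<sigma> (x n))" using n q spos_step[of \<sigma> x n] by simp
  show ?thesis using seq_image_at[OF jl] q jl by blast
qed

end



lemma lang_blk: "w \<in> lang X \<longleftrightarrow> (\<exists>x\<in>X. \<exists>i. w = blk x i (length w))"
  by (simp add: lang_def blk_def)

lemma prefix_nth': "prefix xs ys \<Longrightarrow> i < length xs \<Longrightarrow> ys ! i = xs ! i"
  by (rule prefix_nth)

locale slp =
  fixes A :: "'a set" and \<sigma> :: "'a \<Rightarrow> 'b list" and l :: 'b
  assumes slp: "strongly_left_proper A \<sigma> l"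
    and inj: "inj_on \<sigma> A"
begin

lemma ne: "a \<in> A \<Longrightarrow> \<sigma> a \<noteq> []" using slp by (simp add: strongly_left_proper_def)
lemma hd_l: "a \<in> A \<Longrightarrow> hd (\<sigma> a) = l" using slp by (simp add: strongly_left_proper_def)
lemma nth0_l: "a \<in> A \<Longrightarrow> \<sigma> a ! 0 = l" using ne hd_l by (simp add: hd_conv_nth)

lemma tl_nol: assumes "a \<in> A" shows "l \<notin> set (tl (\<sigma> a))"
proof -
  obtain r where r: "\<sigma> a = l # r" using ne[OF assms] hd_l[OF assms] by (cases "\<sigma> a") auto
  have "count_list (\<sigma> a) l = 1" using slp assms by (simp add: strongly_left_proper_def)
  then have "count_list r l = 0" using r by simp
  then show ?thesis using r by (simp add: count_list_0_iff)
qed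

lemma marked: assumes "a \<in> A" "j < length (\<sigma> a)" "\<sigma> a ! j = l" shows "j = 0"
proof (rule ccontr)
  assume "j \<noteq> 0"
  then have "\<sigma> a ! j = tl (\<sigma> a) ! (j - 1)" using ne[OF assms(1)] by (cases "\<sigma> a") auto
  moreover have "j - 1 < length (tl (\<sigma> a))" using assms(2) \<open>j \<noteq> 0\<close> by simp
  ultimately have "l \<in> set (tl (\<sigma> a))" using assms(3) by (metis nth_mem)
  then show False using tl_nol[OF assms(1)] by simp
qed

lemma hd_morph_l: "v \<in> lists A \<Longrightarrow> hd (morph \<sigma> v @ (l # r)) = l"
  by (cases v) (auto simp: hd_l ne)

lemma align:
  shows "v \<in> lists A \<Longrightarrow> ws \<in> lists A \<Longrightarrow> prefix (morph \<sigma> v @ [l]) (morph \<sigma> ws @ [l]) \<Longrightarrow> \<exists>w2. ws = v @ w2"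
proof (induction v arbitrary: ws)
  case Nil then show ?case by simp
next
  case (Cons a v)
  have "a # v \<in> lists A" by (rule Cons.prems(1))
  then have aA: "a \<in> A" and vA: "v \<in> lists A" by auto
  show ?case
  proof (cases ws)
    case Nil
    then have "length (morph \<sigma> (a # v) @ [l]) \<le> 1" using Cons.prems(3) prefix_length_le by fastforce
    then show ?thesis using ne[OF aA] by simp
  next
    case (Cons a' ws')
    have a'A: "a' \<in> A" and ws'A: "ws' \<in> lists A" using Cons.prems(2) Cons by auto
    let ?L = "\<sigma> a @ (morph \<sigma> v @ [l])" and ?R = "\<sigma> a' @ (morph \<sigma> ws' @ [l])"
    have pr: "prefix ?L ?R" using Cons.prems(3) Cons by simp
    have hL: "(morph \<sigma> v @ [l]) ! 0 = l" using hd_morph_l[OF vA, of "[]"] by (simp add: hd_conv_nth)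
    have hR: "(morph \<sigma> ws' @ [l]) ! 0 = l" using hd_morph_l[OF ws'A, of "[]"] by (simp add: hd_conv_nth)
    have len: "length (\<sigma> a) = length (\<sigma> a')"
    proof (rule ccontr)
      assume "length (\<sigma> a) \<noteq> length (\<sigma> a')"
      then consider "length (\<sigma> a) < length (\<sigma> a')" | "length (\<sigma> a') < length (\<sigma> a)" by linarith
      then show False
      proof cases
        case 1
        have "?R ! length (\<sigma> a) = ?L ! length (\<sigma> a)" using pr by (rule prefix_nth') simp
        then have "\<sigma> a' ! length (\<sigma> a) = l" using 1 hL by (simp add: nth_append)
        then have "length (\<sigma> a) = 0" using marked[OF a'A 1] by simp
        then show False using ne[OF aA] by simp
      next
        case 2
        have "?R ! length (\<sigma> a') = ?L ! length (\<sigma> a')" using pr 2 by (intro prefix_nth') simp_all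
        then have "\<sigma> a ! length (\<sigma> a') = l" using 2 hR by (simp add: nth_append)
        then have "length (\<sigma> a') = 0" using marked[OF aA 2] by simp
        then show False using ne[OF a'A] by simp
      qed
    qed
    have "\<sigma> a = \<sigma> a'" using pr len by (auto simp: prefix_def)
    then have "a = a'" using inj aA a'A by (meson inj_onD)
    then have "prefix (morph \<sigma> v @ [l]) (morph \<sigma> ws' @ [l])" using pr by simp
    then obtain w2 where "ws' = v @ w2" using Cons.IH[OF vA ws'A] by blast
    then show ?thesis using Cons \<open>a = a'\<close> by simp
  qed
qed

lemma prefix_break:
  assumes "p \<noteq> []" "l \<notin> set (tl p)" "u \<noteq> []" "E \<noteq> []" "hd E = l" "prefix (p @ [d]) (u @ E)"
  shows "prefix p u \<and> d = (u @ [l]) ! length p"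
proof -
  have le: "length p \<le> length u"
  proof (rule ccontr)
    assume "\<not> ?thesis"
    then have lt: "length u < length p" by simp
    have "(u @ E) ! length u = (p @ [d]) ! length u" using assms(6) lt by (intro prefix_nth') simp_all
    then have "p ! length u = l" using lt assms(4,5) by (simp add: nth_append hd_conv_nth)
    moreover have "p ! length u = tl p ! (length u - 1)" using assms(3) assms(1) lt
      by (cases p) (auto simp: nth_Cons')
    moreover have "length u - 1 < length (tl p)" using lt assms(3) by (cases u) auto
    ultimately show False using assms(2) by (metis nth_mem)
  qed
  have pp: "prefix p (u @ E)" using assms(6) by (rule append_prefixD)
  have "prefix p u" using prefix_length_prefix[OF pp _ le] by simp
  moreover have "d = (u @ [l]) ! length p"
  proof -
    have "(u @ E) ! length p = (p @ [d]) ! length p" using assms(6) by (intro prefix_nth') simp_all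
    then have d: "d = (u @ E) ! length p" by simp
    show ?thesis
    proof (cases "length p < length u")
      case True then show ?thesis using d by (simp add: nth_append)
    next
      case False
      then have "length p = length u" using le by simp
      then show ?thesis using d assms(4,5) by (simp add: nth_append hd_conv_nth)
    qed
  qed
  ultimately show ?thesis by blast
qed

end



context slp
begin

lemma nonerasing: "(\<And>i. x i \<in> A) \<Longrightarrow> nonerasing_seq \<sigma> x"
  by unfold_locales (simp add: ne)

lemma ext_Y_intro:
  assumes XA: "\<And>x i. x \<in> X \<Longrightarrow> x i \<in> A"
    and w: "a # v @ [b] \<in> lang X" and s: "strict_suffix s (\<sigma> a)" and p: "prefix p (\<sigma> b)"
  shows "(rev (\<sigma> a) ! length s) # s @ morph \<sigma> v @ p @ [(\<sigma> b @ [l]) ! length p] \<in> lang (shift_image \<sigma> X)"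
proof -
  let ?c = "rev (\<sigma> a) ! length s" and ?d = "(\<sigma> b @ [l]) ! length p"
  obtain x i where x: "x \<in> X" and xi: "a # v @ [b] = blk x i (length v + 2)"
    using w by (auto simp: lang_blk)
  interpret ns: nonerasing_seq \<sigma> x using nonerasing XA x by blast
  define e where "e = x (i + int (length v + 2))"
  have eA: "e \<in> A" using XA x e_def by simp
  have bl: "blk x i (length v + 3) = a # v @ [b, e]"
    using blk_add[of x i "length v + 2" 1] xi e_def by (simp add: blk_Suc numeral_3_eq_3)
  define W where "W = morph \<sigma> (blk x i (length v + 3))"
  have W: "W = \<sigma> a @ morph \<sigma> v @ \<sigma> b @ \<sigma> e" using bl W_def by simp
  obtain r where r: "\<sigma> a = r @ s" "r \<noteq> []" using s by (auto simp: strict_suffix_def suffix_def)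
  define \<alpha> where "\<alpha> = length r - 1"
  have c: "?c = last r" using r by (simp add: rev_nth last_conv_nth nth_append)
  have dr: "drop \<alpha> (\<sigma> a) = ?c # s"
  proof -
    have "r = butlast r @ [last r]" using r(2) by simp
    then have "drop \<alpha> r = [last r]" unfolding \<alpha>_def by (metis drop_append length_butlast drop_all le_refl append_Nil drop0 diff_self_eq_0)
    then show ?thesis using r c \<alpha>_def by simp
  qed
  obtain q where q: "\<sigma> b = p @ q" using p by (auto simp: prefix_def)
  have tk: "take (length p + 1) (\<sigma> b @ \<sigma> e) = p @ [?d]"
  proof (cases q)
    case Nil
    then show ?thesis using q ne[OF eA] hd_l[OF eA] by (cases "\<sigma> e") auto
  next
    case (Cons c q')
    then show ?thesis using q by simp
  qed
  define w where "w = ?c # s @ morph \<sigma> v @ p @ [?d]"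
  have ww: "w = take (length w) (drop \<alpha> W)"
  proof -
    have "\<alpha> \<le> length (\<sigma> a)" using r \<alpha>_def by simp
    then have "drop \<alpha> W = (?c # s) @ morph \<sigma> v @ (\<sigma> b @ \<sigma> e)" using W dr by simp
    then show ?thesis using tk w_def by simp
  qed
  define y where "y = (\<lambda>i'. seq_image \<sigma> x (i' + int 0))"
  have yY: "y \<in> shift_image \<sigma> X" unfolding shift_image_def y_def using x ne XA
    by (intro CollectI exI[of _ x] exI[of _ 0]) auto
  have "w = map (\<lambda>j. y (spos \<sigma> x i + int \<alpha> + int j)) [0..<length w]"
  proof (rule nth_equalityI)
    fix j assume "j < length w"
    have "length w = min (length w) (length W - \<alpha>)" using arg_cong[OF ww, of length] by simp
    moreover have "length w > 0" by (simp add: w_def)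
    ultimately have lW: "length W \<ge> \<alpha> + length w" by (simp add: min_def split: if_splits; arith)
    have "\<alpha> + j < length W" using lW \<open>j < length w\<close> by simp
    then have "seq_image \<sigma> x (spos \<sigma> x i + int (\<alpha> + j)) = W ! (\<alpha> + j)"
      unfolding W_def by (rule ns.seq_image_blk)
    moreover have "w ! j = W ! (\<alpha> + j)"
    proof -
      have "w ! j = take (length w) (drop \<alpha> W) ! j" using ww by simp
      also have "\<dots> = drop \<alpha> W ! j" using \<open>j < length w\<close> by simp
      also have "\<dots> = W ! (\<alpha> + j)" using lW by simp
      finally show ?thesis .
    qed
    ultimately show "w ! j = map (\<lambda>j. y (spos \<sigma> x i + int \<alpha> + int j)) [0..<length w] ! j"
      using \<open>j < length w\<close> by (simp add: y_def add.assoc)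
  qed simp
  then show ?thesis using yY unfolding w_def lang_def
    by (intro CollectI bexI[of _ y] exI[of _ "spos \<sigma> x i + int \<alpha>"]) simp_all
qed

end


context slp
begin

lemma ext_Y_elim:
  assumes XA: "\<And>x i. x \<in> X \<Longrightarrow> x i \<in> A"
    and snl: "l \<notin> set s" and pne: "p \<noteq> []" and phd: "hd p = l" and ptl: "l \<notin> set (tl p)"
    and vA: "v \<in> lists A"
    and w: "c' # s @ morph \<sigma> v @ p @ [d'] \<in> lang (shift_image \<sigma> X)"
  shows "\<exists>a b. a \<in> A \<and> b \<in> A \<and> a # v @ [b] \<in> lang X \<and> strict_suffix s (\<sigma> a) \<and> prefix p (\<sigma> b)
           \<and> c' = rev (\<sigma> a) ! length s \<and> d' = (\<sigma> b @ [l]) ! length p"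
proof -
  define w where "w = c' # s @ morph \<sigma> v @ p @ [d']"
  define L where "L = length w"
  obtain p' where p': "p = l # p'" using pne phd by (cases p) auto
  have "w \<in> lang (shift_image \<sigma> X)" using w w_def by simp
  then obtain y i where yY: "y \<in> shift_image \<sigma> X" and wy: "w = map (\<lambda>j. y (i + int j)) [0..<L]"
    unfolding L_def lang_def by blast
  obtain x k where x: "x \<in> X" and yx: "y = (\<lambda>i. seq_image \<sigma> x (i + int k))"
    using yY unfolding shift_image_def by blast
  interpret ns: nonerasing_seq \<sigma> x using nonerasing XA x by blast
  have xA: "\<And>i. x i \<in> A" using XA x by blast
  define m where "m = i + int k"
  have wz: "w ! j = seq_image \<sigma> x (m + int j)" if "j < L" for j
    using that wy yx m_def by (simp add: algebra_simps)
  have w1: "w ! Suc (length s) = l"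
  proof -
    have "w = (c' # s) @ (morph \<sigma> v @ l # (p' @ [d']))" using w_def p' by simp
    then have "w ! Suc (length s) = (morph \<sigma> v @ l # (p' @ [d'])) ! 0" by (simp add: nth_append)
    also have "\<dots> = l" using hd_morph_l[OF vA, of "p' @ [d']"] by (simp add: hd_conv_nth)
    finally show ?thesis .
  qed
  have Lge: "L \<ge> length s + length (morph \<sigma> v) + length p + 2" by (simp add: L_def w_def)
  obtain n0 j0 where n0: "j0 < length (\<sigma> (x n0))" "m + int (Suc (length s)) = spos \<sigma> x n0 + int j0"
    "seq_image \<sigma> x (m + int (Suc (length s))) = \<sigma> (x n0) ! j0"
    using ns.seq_image_in by blast
  have "\<sigma> (x n0) ! j0 = l" using n0(3) wz[of "Suc (length s)"] w1 Lge by simp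
  then have "j0 = 0" using marked[OF xA n0(1)] by simp
  then have sp0: "spos \<sigma> x n0 = m + int (length s) + 1" using n0(2) by simp
  define n1 where "n1 = n0 - 1"
  define a' where "a' = x n1"
  have a'A: "a' \<in> A" using xA a'_def by simp
  have sp1: "spos \<sigma> x n0 = spos \<sigma> x n1 + int (length (\<sigma> a'))"
    using spos_step[of \<sigma> x n1] n1_def a'_def by simp
  have slt: "length s < length (\<sigma> a')"
  proof (rule ccontr)
    assume "\<not> ?thesis"
    then have le: "length (\<sigma> a') \<le> length s" by simp
    have pos: "length (\<sigma> a') > 0" using ne[OF a'A] by simp
    define j1 where "j1 = Suc (length s) - length (\<sigma> a')"
    have j1: "1 \<le> j1" "j1 \<le> length s" using le pos j1_def by linarith+
    have "m + int j1 = spos \<sigma> x n1 + int 0" using sp0 sp1 j1_def le by simp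
    then have "seq_image \<sigma> x (m + int j1) = l"
      using ns.seq_image_at[of 0 n1] pos nth0_l[OF a'A] a'_def by simp
    then have "w ! j1 = l" using wz[of j1] j1 Lge by simp
    moreover have "w ! j1 = s ! (j1 - 1)" using j1 by (cases j1) (auto simp: w_def nth_append)
    ultimately have "l \<in> set s" using j1 by (metis nth_mem less_le_trans diff_less zero_less_one le_less_trans)
    then show False using snl by simp
  qed
  define \<alpha> where "\<alpha> = length (\<sigma> a') - length s - 1"
  have m\<alpha>: "m = spos \<sigma> x n1 + int \<alpha>" using sp0 sp1 \<alpha>_def slt by simp
  define W2 where "W2 = morph \<sigma> (blk x n0 L)"
  define W where "W = morph \<sigma> (blk x n1 (Suc L))"
  have WW: "W = \<sigma> a' @ W2" unfolding W_def W2_def using blk_Suc[of x n1 L] n1_def a'_def by simp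
  have lW2: "length W2 \<ge> L" unfolding W2_def using length_morph_ge[of "blk x n0 L" \<sigma>] ne xA
    by (auto simp: set_blk)
  have wW: "w = take L (drop \<alpha> W)"
  proof (rule nth_equalityI)
    show "length w = length (take L (drop \<alpha> W))" using lW2 WW \<alpha>_def slt L_def by simp
  next
    fix j assume j: "j < length w"
    have lt: "\<alpha> + j < length W" using lW2 WW \<alpha>_def slt j L_def by simp
    have "w ! j = seq_image \<sigma> x (spos \<sigma> x n1 + int (\<alpha> + j))" using wz[of j] j m\<alpha> L_def by (simp add: add.assoc)
    also have "\<dots> = W ! (\<alpha> + j)" using lt unfolding W_def by (rule ns.seq_image_blk)
    also have "\<dots> = take L (drop \<alpha> W) ! j" using lt j L_def by simp
    finally show "w ! j = take L (drop \<alpha> W) ! j" .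
  qed
  have ld: "length (drop \<alpha> (\<sigma> a')) = Suc (length s)" using \<alpha>_def slt by simp
  have "drop \<alpha> W = drop \<alpha> (\<sigma> a') @ W2" using WW \<alpha>_def by simp
  then have "w = drop \<alpha> (\<sigma> a') @ take (L - Suc (length s)) W2" using wW ld Lge by simp
  moreover have "w = (c' # s) @ (morph \<sigma> v @ p @ [d'])" by (simp add: w_def)
  ultimately have eqs: "c' # s = drop \<alpha> (\<sigma> a')" "morph \<sigma> v @ p @ [d'] = take (L - Suc (length s)) W2"
    using ld append_eq_append_conv[of "c' # s" "drop \<alpha> (\<sigma> a')"] by auto
  have sa: "\<sigma> a' = take \<alpha> (\<sigma> a') @ [c'] @ s" using eqs(1) by (metis append_Cons append_Nil append_take_drop_id)
  have ss: "strict_suffix s (\<sigma> a')"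
    unfolding strict_suffix_def suffix_def using sa slt by (metis append_assoc less_irrefl)
  have cc: "c' = rev (\<sigma> a') ! length s"
  proof -
    have "rev (\<sigma> a') = rev s @ [c'] @ rev (take \<alpha> (\<sigma> a'))" using sa by (metis rev_append rev_singleton_conv append_assoc)
    then show ?thesis by (simp add: nth_append)
  qed
  define ws where "ws = blk x n0 L"
  have wsA: "ws \<in> lists A" using xA by (auto simp: ws_def set_blk)
  have pW2: "prefix (morph \<sigma> v @ p @ [d']) (morph \<sigma> ws)" using eqs(2) W2_def ws_def by (metis take_is_prefix)
  have "prefix (morph \<sigma> v @ [l]) (morph \<sigma> v @ p @ [d'])" using p' by simp
  then have "prefix (morph \<sigma> v @ [l]) (morph \<sigma> ws @ [l])" using pW2
    by (meson prefix_order.trans prefixI)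
  then obtain w2 where w2: "ws = v @ w2" using align vA wsA by blast
  have lv: "length (morph \<sigma> v) \<ge> length v" using length_morph_ge[of v \<sigma>] vA ne by auto
  have Lv: "L \<ge> length v + 3" using Lge lv pne by (cases p) auto
  have "ws = blk x n0 (length v) @ blk x (n0 + int (length v)) (L - length v)"
    using blk_add[of x n0 "length v" "L - length v"] Lv ws_def by simp
  then have vb: "v = blk x n0 (length v)" and w2b: "w2 = blk x (n0 + int (length v)) (L - length v)"
    using w2 by (simp_all add: append_eq_append_conv)
  define b' where "b' = x (n0 + int (length v))"
  define e' where "e' = x (n0 + int (length v) + 1)"
  define rest where "rest = blk x (n0 + int (length v) + 1 + 1) (L - length v - 2)"
  have "L - length v = Suc (Suc (L - length v - 2))" using Lv by simp
  then have w2e: "w2 = b' # e' # rest" using w2b unfolding b'_def e'_def rest_def by (simp add: blk_Suc)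
  have b'A: "b' \<in> A" and e'A: "e' \<in> A" using xA b'_def e'_def by auto
  have "prefix (morph \<sigma> v @ (p @ [d'])) (morph \<sigma> v @ (\<sigma> b' @ (\<sigma> e' @ morph \<sigma> rest)))"
    using pW2 w2 w2e by simp
  then have pb: "prefix (p @ [d']) (\<sigma> b' @ (\<sigma> e' @ morph \<sigma> rest))" by simp
  have br: "prefix p (\<sigma> b') \<and> d' = (\<sigma> b' @ [l]) ! length p"
    by (rule prefix_break[OF pne ptl ne[OF b'A] _ _ pb]) (use ne[OF e'A] hd_l[OF e'A] in auto)
  have "blk x n1 (length v + 2) = a' # v @ [b']"
  proof -
    have "blk x n1 (length v + 2) = a' # blk x n0 (length v + 1)"
      using blk_Suc[of x n1 "length v + 1"] n1_def a'_def by simp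
    also have "blk x n0 (length v + 1) = blk x n0 (length v) @ blk x (n0 + int (length v)) 1" by (rule blk_add)
    finally show ?thesis using vb b'_def by (simp add: blk_Suc)
  qed
  then have "a' # v @ [b'] \<in> lang X" using x unfolding lang_blk by (metis length_Cons length_append
        list.size(3) add_2_eq_Suc' length_blk)
  then show ?thesis using a'A b'A ss br cc by blast
qed

end


lemma blk_one[simp]: "blk x n (Suc 0) = [x n]" by (simp add: blk_def)

lemma Eminus_Ext: "Eminus X w = fst ` Ext X w"
proof (intro set_eqI iffI)
  fix a assume "a \<in> Eminus X w"
  then obtain x i where x: "x \<in> X" "a # w = blk x i (length w + 1)" by (auto simp: Eminus_def lang_blk)
  define b where "b = x (i + int (length w + 1))"
  have "blk x i (length w + 1 + 1) = a # w @ [b]" using blk_add[of x i "length w + 1" 1] x b_def by simp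
  then have "a # w @ [b] \<in> lang X" using x(1) unfolding lang_blk
    by (intro bexI[of _ x] exI[of _ i]) simp_all
  then show "a \<in> fst ` Ext X w" by (force simp: Ext_def)
next
  fix a assume "a \<in> fst ` Ext X w"
  then obtain b where "a # w @ [b] \<in> lang X" by (auto simp: Ext_def)
  then obtain x i where x: "x \<in> X" "a # w @ [b] = blk x i (length w + 1 + 1)" by (auto simp: lang_blk)
  then have "(a # w) @ [b] = blk x i (length w + 1) @ blk x (i + int (length w + 1)) 1" using blk_add[of x i "length w + 1" 1] by simp
  then have "a # w = blk x i (length w + 1)" by (simp add: append_eq_append_conv)
  then show "a \<in> Eminus X w" using x(1) unfolding Eminus_def lang_blk by force
qed

lemma Eplus_Ext: "Eplus X w = snd ` Ext X w"
proof (intro set_eqI iffI)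
  fix b assume "b \<in> Eplus X w"
  then obtain x i where x: "x \<in> X" "w @ [b] = blk x i (length w + 1)" by (auto simp: Eplus_def lang_blk)
  define a where "a = x (i - 1)"
  have "blk x (i - 1) (Suc (length w + 1)) = a # w @ [b]" using blk_Suc[of x "i - 1" "length w + 1"] x a_def by simp
  then have "a # w @ [b] \<in> lang X" using x(1) unfolding lang_blk
    by (intro bexI[of _ x] exI[of _ "i - 1"]) simp_all
  then show "b \<in> snd ` Ext X w" by (force simp: Ext_def)
next
  fix b assume "b \<in> snd ` Ext X w"
  then obtain a where "a # w @ [b] \<in> lang X" by (auto simp: Ext_def)
  then obtain x i where x: "x \<in> X" "a # w @ [b] = blk x i (Suc (length w + 1))" by (auto simp: lang_blk)
  then have "a # w @ [b] = x i # blk x (i + 1) (length w + 1)" by (simp only: blk_Suc)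
  then have "w @ [b] = blk x (i + 1) (length w + 1)" by simp
  then show "b \<in> Eplus X w" using x(1) unfolding Eplus_def lang_blk by force
qed

lemma lang_mid: "a # w @ [b] \<in> lang X \<Longrightarrow> w \<in> lang X"
proof -
  assume "a # w @ [b] \<in> lang X"
  then obtain x i where x: "x \<in> X" "a # w @ [b] = blk x i (Suc (length w + 1))" by (auto simp: lang_blk)
  then have "a # w @ [b] = x i # blk x (i + 1) (length w + 1)" by (simp only: blk_Suc)
  then have "w @ [b] = blk x (i + 1) (length w + 1)" by simp
  then have "w @ [b] = blk x (i + 1) (length w) @ blk x (i + 1 + int (length w)) 1" using blk_add by metis
  then have "w = blk x (i + 1) (length w)" by (simp add: append_eq_append_conv)
  then show "w \<in> lang X" using x(1) unfolding lang_blk by force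
qed

lemma rtrancl_map_graph:
  assumes "(x, y) \<in> {(u, v). u \<in> V \<and> v \<in> V \<and> E u v}\<^sup>*"
    and "\<And>p q. p \<in> V \<Longrightarrow> q \<in> V \<Longrightarrow> E p q \<Longrightarrow> E' (F p) (F q)"
  shows "(F x, F y) \<in> {(u, v). u \<in> F ` V \<and> v \<in> F ` V \<and> E' u v}\<^sup>*"
  using assms(1)
proof (induction rule: rtrancl_induct)
  case base then show ?case by simp
next
  case (step y z)
  then show ?case using assms(2) by (auto intro: rtrancl_into_rtrancl)
qed

lemma tree_iso:
  assumes inj: "inj_on F V" and adj: "\<And>p q. p \<in> V \<Longrightarrow> q \<in> V \<Longrightarrow> E' (F p) (F q) \<longleftrightarrow> E p q"
    and T: "is_tree V E"
  shows "is_tree (F ` V) E'"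
  unfolding is_tree_def
proof
  show "graph_connected (F ` V) E'"
    using T unfolding is_tree_def graph_connected_def
    using rtrancl_map_graph[where E = E and E' = E' and F = F and V = V] adj by blast
next
  show "graph_acyclic (F ` V) E'"
    unfolding graph_acyclic_def
  proof
    assume "\<exists>cs. 3 \<le> length cs \<and> distinct cs \<and> set cs \<subseteq> F ` V \<and>
      (\<forall>i<length cs. E' (cs ! i) (cs ! ((i + 1) mod length cs)))"
    then obtain cs where cs: "3 \<le> length cs" "distinct cs" "set cs \<subseteq> F ` V"
      "\<forall>i<length cs. E' (cs ! i) (cs ! ((i + 1) mod length cs))" by blast
    define G where "G = inv_into V F"
    define ds where "ds = map G cs"
    have GV: "\<And>y. y \<in> F ` V \<Longrightarrow> G y \<in> V" unfolding G_def by (rule inv_into_into)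
    have FG: "\<And>y. y \<in> F ` V \<Longrightarrow> F (G y) = y" unfolding G_def by (rule f_inv_into_f)
    have "inj_on G (F ` V)" unfolding G_def by (rule inj_on_inv_into) simp
    then have "distinct ds" using cs(2,3) unfolding ds_def by (simp add: distinct_map inj_on_subset)
    moreover have "set ds \<subseteq> V" using cs(3) GV unfolding ds_def by auto
    moreover have "\<forall>i<length ds. E (ds ! i) (ds ! ((i + 1) mod length ds))"
    proof (intro allI impI)
      fix i assume i: "i < length ds"
      have l: "length ds = length cs" by (simp add: ds_def)
      have i2: "(i + 1) mod length cs < length cs" using cs(1) by (intro mod_less_divisor) auto
      have m1: "cs ! i \<in> F ` V" using cs(3) i l by (metis nth_mem subsetD)
      have m2: "cs ! ((i + 1) mod length cs) \<in> F ` V" using cs(3) i2 by (metis nth_mem subsetD)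
      have "E' (F (G (cs ! i))) (F (G (cs ! ((i + 1) mod length cs))))" using cs(4) i l FG m1 m2 by simp
      then have "E (G (cs ! i)) (G (cs ! ((i + 1) mod length cs)))" using adj GV m1 m2 by blast
      then show "E (ds ! i) (ds ! ((i + 1) mod length ds))" using i i2 l by (simp add: ds_def)
    qed
    moreover have "3 \<le> length ds" using cs(1) by (simp add: ds_def)
    ultimately show False using T unfolding is_tree_def graph_acyclic_def by blast
  qed
qed

lemma cycle_two_nbrs:
  assumes sym: "\<And>u v. E u v \<Longrightarrow> E v u"
    and cs: "3 \<le> length cs" "distinct cs" "\<forall>i<length cs. E (cs ! i) (cs ! ((i + 1) mod length cs))"
    and v: "v \<in> set cs"
  shows "\<exists>u1\<in>set cs. \<exists>u2\<in>set cs. u1 \<noteq> u2 \<and> E v u1 \<and> E v u2"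
proof -
  let ?n = "length cs"
  obtain i where i: "i < ?n" "cs ! i = v" using v by (metis in_set_conv_nth)
  define j where "j = (i + ?n - 1) mod ?n"
  have j: "j < ?n" using cs(1) unfolding j_def by (intro mod_less_divisor) auto
  have ji: "(j + 1) mod ?n = i"
  proof -
    have "(j + 1) mod ?n = ((i + ?n - 1) + 1) mod ?n" unfolding j_def by (simp add: mod_Suc_eq)
    also have "(i + ?n - 1) + 1 = i + ?n" using cs(1) by simp
    finally show ?thesis using i by simp
  qed
  have e1: "E v (cs ! ((i + 1) mod ?n))" using cs(3) i by auto
  have e2: "E v (cs ! j)" using cs(3) j ji i sym by metis
  have ne: "(i + 1) mod ?n \<noteq> j"
  proof
    assume h: "(i + 1) mod ?n = j"
    have "(i + 2) mod ?n = ((i + 1) mod ?n + 1) mod ?n" by (simp add: mod_Suc_eq)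
    then have "(i + 2) mod ?n = i mod ?n" using h ji i by simp
    then have "?n dvd (i + 2) - i" using mod_eq_dvd_iff_nat[of i "i + 2" ?n] by simp
    then have "?n dvd 2" by simp
    then have "?n \<le> 2" by (rule dvd_imp_le) simp
    then show False using cs(1) by simp
  qed
  have i1: "(i + 1) mod ?n < ?n" using cs(1) by (intro mod_less_divisor) auto
  have "cs ! ((i + 1) mod ?n) \<noteq> cs ! j" using ne nth_eq_iff_index_eq[OF cs(2) i1 j] by simp
  then show ?thesis using e1 e2 j cs(1) by (metis nth_mem mod_less_divisor less_le_trans zero_less_numeral le_trans)
qed



lemma path5_tree:
  assumes d: "distinct [w1, w2, w3, w4, w5]"
    and E: "\<And>u v. E u v \<longleftrightarrow> (u, v) \<in> {(w1,w2),(w2,w3),(w3,w4),(w4,w5)} \<or> (v, u) \<in> {(w1,w2),(w2,w3),(w3,w4),(w4,w5)}"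
  shows "is_tree {w1, w2, w3, w4, w5} E"
  unfolding is_tree_def
proof
  let ?V = "{w1, w2, w3, w4, w5}"
  let ?R = "{(u, v). u \<in> ?V \<and> v \<in> ?V \<and> E u v}"
  have e: "(w1,w2) \<in> ?R" "(w2,w1) \<in> ?R" "(w2,w3) \<in> ?R" "(w3,w2) \<in> ?R"
    "(w3,w4) \<in> ?R" "(w4,w3) \<in> ?R" "(w4,w5) \<in> ?R" "(w5,w4) \<in> ?R" using E by auto
  have f: "(w1, x) \<in> ?R\<^sup>* \<and> (x, w1) \<in> ?R\<^sup>*" if "x \<in> ?V" for x
  proof -
    have a2: "(w1, w2) \<in> ?R\<^sup>*" "(w2, w1) \<in> ?R\<^sup>*" using e by auto
    have a3: "(w1, w3) \<in> ?R\<^sup>*" "(w3, w1) \<in> ?R\<^sup>*" using a2 e by (meson rtrancl_into_rtrancl converse_rtrancl_into_rtrancl)+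
    have a4: "(w1, w4) \<in> ?R\<^sup>*" "(w4, w1) \<in> ?R\<^sup>*" using a3 e by (meson rtrancl_into_rtrancl converse_rtrancl_into_rtrancl)+
    have a5: "(w1, w5) \<in> ?R\<^sup>*" "(w5, w1) \<in> ?R\<^sup>*" using a4 e by (meson rtrancl_into_rtrancl converse_rtrancl_into_rtrancl)+
    show ?thesis using that a2 a3 a4 a5 by auto
  qed
  show "graph_connected ?V E" unfolding graph_connected_def
  proof (intro conjI ballI)
    show "?V \<noteq> {}" by simp
  next
    fix x y assume "x \<in> ?V" "y \<in> ?V"
    then show "(x, y) \<in> ?R\<^sup>*" using f[of x] f[of y] by (blast intro: rtrancl_trans)
  qed
next
  let ?V = "{w1, w2, w3, w4, w5}"
  have sym: "\<And>u v. E u v \<Longrightarrow> E v u" using E by blast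
  show "graph_acyclic ?V E" unfolding graph_acyclic_def
  proof
    assume "\<exists>cs. 3 \<le> length cs \<and> distinct cs \<and> set cs \<subseteq> ?V \<and>
      (\<forall>i<length cs. E (cs ! i) (cs ! ((i + 1) mod length cs)))"
    then obtain cs where cs: "3 \<le> length cs" "distinct cs" "set cs \<subseteq> ?V"
      "\<forall>i<length cs. E (cs ! i) (cs ! ((i + 1) mod length cs))" by blast
    have nb: "\<And>v. v \<in> set cs \<Longrightarrow> \<exists>u1\<in>set cs. \<exists>u2\<in>set cs. u1 \<noteq> u2 \<and> E v u1 \<and> E v u2"
      using cycle_two_nbrs[of E cs] sym cs(1,2,4) by blast
    have n1: "w1 \<notin> set cs"
    proof
      assume "w1 \<in> set cs"
      from nb[OF this] obtain u1 u2 where "u1 \<noteq> u2" "E w1 u1" "E w1 u2" by blast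
      then show False using E d by auto
    qed
    have n5: "w5 \<notin> set cs"
    proof
      assume "w5 \<in> set cs"
      from nb[OF this] obtain u1 u2 where "u1 \<noteq> u2" "E w5 u1" "E w5 u2" by blast
      then show False using E d by auto
    qed
    have n2: "w2 \<notin> set cs"
    proof
      assume "w2 \<in> set cs"
      from nb[OF this] obtain u1 u2 where "u1 \<in> set cs" "u2 \<in> set cs" "u1 \<noteq> u2" "E w2 u1" "E w2 u2" by blast
      then show False using E d n1 by auto
    qed
    have n4: "w4 \<notin> set cs"
    proof
      assume "w4 \<in> set cs"
      from nb[OF this] obtain u1 u2 where "u1 \<in> set cs" "u2 \<in> set cs" "u1 \<noteq> u2" "E w4 u1" "E w4 u2" by blast
      then show False using E d n5 by auto
    qed
    have "set cs \<subseteq> {w3}" using cs(3) n1 n2 n4 n5 by auto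
    then have "card (set cs) \<le> card {w3}" by (intro card_mono) auto
    then have "card (set cs) \<le> 1" by simp
    then show False using cs(1,2) distinct_card by fastforce
  qed
qed



definition per :: "'a list \<Rightarrow> int \<Rightarrow> int \<Rightarrow> 'a" where
  "per w k = (\<lambda>n. w ! nat ((n + k) mod int (length w)))"

lemma per_in: "w \<noteq> [] \<Longrightarrow> per w k n \<in> set w"
proof -
  assume "w \<noteq> []"
  then have "nat ((n + k) mod int (length w)) < length w"
    by (simp add: nat_less_iff)
  then show ?thesis unfolding per_def by simp
qed

lemma per_mod: "w \<noteq> [] \<Longrightarrow> per w k = per w (k mod int (length w))"
  unfolding per_def by (simp add: mod_add_right_eq)

lemma shift_per: "shift (per w k) = per w (k + 1)"
  unfolding shift_def per_def by (simp add: algebra_simps)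

lemma closed_finite:
  assumes "finite X" "X \<subseteq> UNIV \<rightarrow> A"
  shows "closedin (product_topology (\<lambda>_::int. discrete_topology A) UNIV) X"
proof -
  have "t1_space (product_topology (\<lambda>_::int. discrete_topology A) UNIV)"
    by (rule Hausdorff_imp_t1_space) (simp add: Hausdorff_space_product_topology)
  moreover have "X \<subseteq> topspace (product_topology (\<lambda>_::int. discrete_topology A) UNIV)"
    using assms(2) by (auto simp: PiE_def)
  ultimately show ?thesis using assms(1) t1_space_closedin_finite by blast
qed

lemma per6:
  fixes c0 c5 :: 'a
  assumes "a # [y, y, z, z] @ [b] = map (\<lambda>j. per [c0, y, y, z, z, c5] k (i + int j)) [0..<6]"
    and "y \<noteq> z"
  shows "a = c0 \<and> b = c5"
proof -
  define r where "r = (i + k) mod 6"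
  have r: "0 \<le> r" "r < 6" unfolding r_def by simp_all
  have e: "\<And>j. j < 6 \<Longrightarrow> (a # [y, y, z, z] @ [b]) ! j = [c0, y, y, z, z, c5] ! nat ((r + int j) mod 6)"
  proof -
    fix j :: nat assume j: "j < 6"
    have m: "(r + int j) mod 6 = (i + (k + int j)) mod 6" unfolding r_def
      by (metis mod_add_right_eq add.commute add.left_commute)
    show "(a # [y, y, z, z] @ [b]) ! j = [c0, y, y, z, z, c5] ! nat ((r + int j) mod 6)"
      using arg_cong[OF assms(1), of "\<lambda>l. l ! j"] j unfolding m per_def by (simp add: algebra_simps)
  qed
  have e0: "a = [c0, y, y, z, z, c5] ! nat (r mod 6)" using e[of 0] by simp
  have e1: "y = [c0, y, y, z, z, c5] ! nat ((r + 1) mod 6)" using e[of 1] by simp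
  have e2: "y = [c0, y, y, z, z, c5] ! nat ((r + 2) mod 6)" using e[of 2] by simp
  have e3: "z = [c0, y, y, z, z, c5] ! nat ((r + 3) mod 6)" using e[of 3] by simp
  have e4: "z = [c0, y, y, z, z, c5] ! nat ((r + 4) mod 6)" using e[of 4] by simp
  have e5: "b = [c0, y, y, z, z, c5] ! nat ((r + 5) mod 6)" using e[of 5] by simp
  consider "r = 0" | "r = 1" | "r = 2" | "r = 3" | "r = 4" | "r = 5" using r by linarith
  then show ?thesis
  proof cases
    case 1 then show ?thesis using e0 e5 by simp
  next
    case 2 then show ?thesis using e2 e3 assms(2) by simp
  next
    case 3 then show ?thesis using e1 e2 assms(2) by simp
  next
    case 4 then show ?thesis using e1 e2 assms(2) by simp
  next
    case 5 then show ?thesis using e2 e3 assms(2) by (simp add: numeral_eq_Suc)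
  next
    case 6 then show ?thesis using e2 e3 assms(2) by (simp add: numeral_eq_Suc)
  qed
qed

lemma construct:
  assumes fin: "finite A" and cA: "card A \<ge> 2" and PA: "P \<subseteq> A \<times> A" and Pne: "P \<noteq> {}"
  shows "\<exists>X v. shift_space A X \<and> v \<in> lists A \<and> v \<in> lang X \<and> Ext X v = P"
proof -
  obtain y z where yz: "y \<in> A" "z \<in> A" "y \<noteq> z"
  proof -
    obtain B where "B \<subseteq> A" "card B = 2" using cA obtain_subset_with_card_n by metis
    then show ?thesis using that unfolding card_2_iff by blast
  qed
  obtain F where F: "set F = A" "distinct F" using finite_distinct_list[OF fin] by blast
  have lF: "length F \<ge> 2" using F cA distinct_card by metis
  define wd where "wd = (\<lambda>(\<alpha>::'a, \<beta>::'a). [\<alpha>, y, y, z, z, \<beta>])"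
  define W where "W = insert F (wd ` P)"
  define X where "X = {per w k | w k. w \<in> W}"
  define v where "v = [y, y, z, z]"
  have finP: "finite P" using PA fin by (meson finite_SigmaI finite_subset)
  have Wne: "\<And>w. w \<in> W \<Longrightarrow> w \<noteq> []" using lF unfolding W_def wd_def by auto
  have WA: "\<And>w. w \<in> W \<Longrightarrow> set w \<subseteq> A" using F PA yz unfolding W_def wd_def by auto
  have XA: "X \<subseteq> UNIV \<rightarrow> A"
    unfolding X_def using per_in WA Wne by blast
  have finX: "finite X"
  proof -
    have "X \<subseteq> (\<Union>w\<in>W. per w ` {0..<int (length w)})"
    proof
      fix x assume "x \<in> X"
      then obtain w k where w: "w \<in> W" "x = per w k" unfolding X_def by blast
      then have "x = per w (k mod int (length w))" using per_mod Wne by blast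
      moreover have "k mod int (length w) \<in> {0..<int (length w)}" using Wne[OF w(1)] by simp
      ultimately show "x \<in> (\<Union>w\<in>W. per w ` {0..<int (length w)})" using w(1) by blast
    qed
    moreover have "finite W" using finP unfolding W_def by simp
    ultimately show ?thesis by (meson finite_UN_I finite_atLeastLessThan_int finite_imageI finite_subset)
  qed
  have sh: "shift ` X = X"
  proof
    show "shift ` X \<subseteq> X" unfolding X_def using shift_per by blast
  next
    show "X \<subseteq> shift ` X"
    proof
      fix x assume "x \<in> X"
      then obtain w k where w: "w \<in> W" "x = per w k" unfolding X_def by blast
      then have "x = shift (per w (k - 1))" using shift_per[of w "k - 1"] by simp
      moreover have "per w (k - 1) \<in> X" using w unfolding X_def by blast
      ultimately show "x \<in> shift ` X" by blast
    qed
  qed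
  have occ: "\<forall>a\<in>A. \<exists>x\<in>X. \<exists>i. x i = a"
  proof
    fix a assume "a \<in> A"
    then obtain j where j: "j < length F" "F ! j = a" using F by (metis in_set_conv_nth)
    have "per F 0 (int j) = a" using j unfolding per_def by simp
    moreover have "per F 0 \<in> X" unfolding X_def W_def by blast
    ultimately show "\<exists>x\<in>X. \<exists>i. x i = a" by blast
  qed
  have ss: "shift_space A X" unfolding shift_space_def using XA closed_finite[OF finX XA] sh occ by blast
  have ext: "a # v @ [b] \<in> lang X \<longleftrightarrow> (a, b) \<in> P" for a b
  proof
    assume "(a, b) \<in> P"
    then have "wd (a, b) \<in> W" unfolding W_def by blast
    then have "per (wd (a, b)) 0 \<in> X" unfolding X_def by blast
    moreover have "a # v @ [b] = map (\<lambda>j. per (wd (a, b)) 0 (0 + int j)) [0..<6]"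
      unfolding per_def wd_def v_def by (simp add: upt_rec)
    ultimately show "a # v @ [b] \<in> lang X" unfolding lang_def v_def
      by (intro CollectI bexI[of _ "per (wd (a, b)) 0"] exI[of _ 0]) simp_all
  next
    assume "a # v @ [b] \<in> lang X"
    then have "\<exists>x\<in>X. \<exists>i. a # v @ [b] = map (\<lambda>j. x (i + int j)) [0..<length (a # v @ [b])]"
      unfolding lang_def mem_Collect_eq .
    then obtain x where x00: "x \<in> X" "\<exists>i. a # v @ [b] = map (\<lambda>j. x (i + int j)) [0..<length (a # v @ [b])]" ..
    from x00(2) obtain i where "a # v @ [b] = map (\<lambda>j. x (i + int j)) [0..<length (a # v @ [b])]" ..
    note x0 = x00(1) this
    have "length (a # v @ [b]) = 6" by (simp add: v_def)
    then have x: "x \<in> X" "a # v @ [b] = map (\<lambda>j. x (i + int j)) [0..<6]" using x0 by simp_all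
    then obtain w k where w: "w \<in> W" "x = per w k" unfolding X_def by blast
    show "(a, b) \<in> P"
    proof (cases "w = F")
      case True
      have e: "(a # v @ [b]) ! j = x (i + int j)" if "j < 6" for j
        using arg_cong[OF x(2), of "\<lambda>l. l ! j"] that by simp
      let ?L = "int (length F)"
      have "length F > 0" using lF by linarith
      then have Lp: "?L > 0" by linarith
      have "y = x (i + 1)" using e[of 1] unfolding v_def by simp
      moreover have "y = x (i + 2)" using e[of 2] unfolding v_def by simp
      ultimately have "F ! nat ((i + 1 + k) mod ?L) = F ! nat ((i + 2 + k) mod ?L)"
        using w(2) True unfolding per_def by simp
      moreover have "nat ((i + 1 + k) mod ?L) < length F" "nat ((i + 2 + k) mod ?L) < length F"
        using Lp by (simp_all add: nat_less_iff)
      ultimately have "nat ((i + 1 + k) mod ?L) = nat ((i + 2 + k) mod ?L)"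
        using F(2) nth_eq_iff_index_eq by blast
      moreover have "0 \<le> (i + 1 + k) mod ?L" "0 \<le> (i + 2 + k) mod ?L" using Lp by simp_all
      ultimately have "(i + 1 + k) mod ?L = (i + 2 + k) mod ?L" using eq_nat_nat_iff by blast
      then have "?L dvd (i + 1 + k) - (i + 2 + k)" by (simp add: mod_eq_dvd_iff)
      moreover have "(i + 1 + k) - (i + 2 + k) = -1" by simp
      ultimately have "?L dvd -1" by simp
      then have "?L dvd 1" by (simp only: dvd_minus_iff)
      then have "?L \<le> 1" by (simp add: zdvd_imp_le)
      then show ?thesis using lF by simp
    next
      case False
      then obtain \<alpha> \<beta> where ab: "(\<alpha>, \<beta>) \<in> P" "w = [\<alpha>, y, y, z, z, \<beta>]" using w unfolding W_def wd_def by auto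
      have "a = \<alpha> \<and> b = \<beta>" using per6[of a y z b \<alpha> \<beta> k i] x(2) w(2) ab(2) yz(3) unfolding v_def by simp
      then show ?thesis using ab by simp
    qed
  qed
  have "v \<in> lang X" using ext[of _ _] Pne lang_mid by (metis subsetI subset_empty surj_pair)
  moreover have "Ext X v = P" using ext unfolding Ext_def by auto
  moreover have "v \<in> lists A" using yz unfolding v_def by simp
  ultimately show ?thesis using ss by blast
qed



lemma lang_lists: "X \<subseteq> UNIV \<rightarrow> A \<Longrightarrow> w \<in> lang X \<Longrightarrow> w \<in> lists A"
proof -
  assume XA: "X \<subseteq> UNIV \<rightarrow> A" and "w \<in> lang X"
  then obtain x i where x: "x \<in> X" "w = blk x i (length w)" by (auto simp: lang_blk)
  have "\<And>j. x j \<in> A" using XA x(1) by (auto simp: Pi_iff)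
  then have "set (blk x i (length w)) \<subseteq> A" by (auto simp: set_blk)
  then show ?thesis using x(2) by (metis in_listsI subsetD)
qed

lemma adj_simps:
  "ext_graph_adj X w (Inl a) (Inr b) \<longleftrightarrow> (a, b) \<in> Ext X w"
  "ext_graph_adj X w (Inr b) (Inl a) \<longleftrightarrow> (a, b) \<in> Ext X w"
  "\<not> ext_graph_adj X w (Inl a) (Inl a')"
  "\<not> ext_graph_adj X w (Inr b) (Inr b')"
  unfolding ext_graph_adj_def by auto

lemma strict_prefix_snoc: "strict_prefix p (xs @ [x]) \<Longrightarrow> prefix p xs"
  by (auto simp: strict_prefix_def)

lemma prefix_strict_snoc: "prefix p xs \<Longrightarrow> strict_prefix p (xs @ [x])"
  by (metis prefix_order.le_less_trans prefix_order.less_le prefix_snoc append_self_conv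
      not_Cons_self2 prefixI prefix_order.antisym)

lemma nondendric4:
  assumes e: "(C1, D1) \<in> Ext Y u" "(C2, D1) \<in> Ext Y u" "(C2, D2) \<in> Ext Y u" "(C1, D2) \<in> Ext Y u"
    and ne: "C1 \<noteq> C2" "D1 \<noteq> D2" and fin: "finite (Ext Y u)" and u: "u \<in> lang Y"
  shows "bispecial Y u \<and> \<not> dendric Y u"
proof
  have "{C1, C2} \<subseteq> Eminus Y u" using e by (force simp: Eminus_Ext)
  moreover have "finite (Eminus Y u)" using fin by (simp add: Eminus_Ext)
  ultimately have m: "card (Eminus Y u) \<ge> 2" using ne by (metis card_2_iff card_mono)
  have "{D1, D2} \<subseteq> Eplus Y u" using e by (force simp: Eplus_Ext)
  moreover have "finite (Eplus Y u)" using fin by (simp add: Eplus_Ext)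
  ultimately have p: "card (Eplus Y u) \<ge> 2" using ne by (metis card_2_iff card_mono)
  show "bispecial Y u" using m p u by (simp add: bispecial_def)
next
  let ?cs = "[Inl C1, Inr D1, Inl C2, Inr D2]"
  have "3 \<le> length ?cs" by simp
  moreover have "distinct ?cs" using ne by simp
  moreover have "set ?cs \<subseteq> ext_graph_vertices Y u"
    using e unfolding ext_graph_vertices_def by (force simp: Eminus_Ext Eplus_Ext)
  moreover have "\<forall>i<length ?cs. ext_graph_adj Y u (?cs ! i) (?cs ! ((i + 1) mod length ?cs))"
  proof (intro allI impI)
    fix i assume "i < length ?cs"
    then have "i = 0 \<or> i = 1 \<or> i = 2 \<or> i = 3" by auto
    then show "ext_graph_adj Y u (?cs ! i) (?cs ! ((i + 1) mod length ?cs))"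
      using e by (auto simp: adj_simps)
  qed
  ultimately have "\<not> graph_acyclic (ext_graph_vertices Y u) (ext_graph_adj Y u)"
    unfolding graph_acyclic_def by blast
  then show "\<not> dendric Y u" by (simp add: dendric_def is_tree_def)
qed

context slp
begin

lemma s_nol: "a \<in> A \<Longrightarrow> strict_suffix s (\<sigma> a) \<Longrightarrow> l \<notin> set s"
proof -
  assume a: "a \<in> A" "strict_suffix s (\<sigma> a)"
  then obtain r where r: "\<sigma> a = r @ s" "r \<noteq> []" by (auto simp: strict_suffix_def suffix_def)
  then have "set s \<subseteq> set (tl (\<sigma> a))" by (cases r) auto
  then show "l \<notin> set s" using tl_nol[OF a(1)] by blast
qed

lemma p_props: "b \<in> A \<Longrightarrow> prefix p (\<sigma> b) \<Longrightarrow> p \<noteq> [] \<Longrightarrow> hd p = l \<and> l \<notin> set (tl p)"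
proof -
  assume b: "b \<in> A" "prefix p (\<sigma> b)" "p \<noteq> []"
  then obtain r where r: "\<sigma> b = p @ r" by (auto simp: prefix_def)
  then have "hd p = l" using hd_l[OF b(1)] b(3) by simp
  moreover have "set (tl p) \<subseteq> set (tl (\<sigma> b))" using r b(3) by (cases p) auto
  ultimately show ?thesis using tl_nol[OF b(1)] by blast
qed

lemma Ext_Y_char:
  assumes XA: "\<And>x i. x \<in> X \<Longrightarrow> x i \<in> A"
    and a0: "a0 \<in> A" "strict_suffix s (\<sigma> a0)" and b0: "b0 \<in> A" "prefix p (\<sigma> b0)" "p \<noteq> []"
    and vA: "v \<in> lists A"
  shows "Ext (shift_image \<sigma> X) (s @ morph \<sigma> v @ p) =
    {(rev (\<sigma> a) ! length s, (\<sigma> b @ [l]) ! length p) | a b. (a, b) \<in> Ext X v \<and> strict_suffix s (\<sigma> a) \<and> prefix p (\<sigma> b)}"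
proof (intro set_eqI iffI)
  fix cd assume "cd \<in> Ext (shift_image \<sigma> X) (s @ morph \<sigma> v @ p)"
  then obtain c' d' where cd: "cd = (c', d')" "c' # s @ morph \<sigma> v @ p @ [d'] \<in> lang (shift_image \<sigma> X)"
    unfolding Ext_def by auto
  have pp: "hd p = l" "l \<notin> set (tl p)" using p_props[OF b0] by auto
  obtain a b where "a \<in> A \<and> b \<in> A \<and> a # v @ [b] \<in> lang X \<and> strict_suffix s (\<sigma> a) \<and> prefix p (\<sigma> b)
           \<and> c' = rev (\<sigma> a) ! length s \<and> d' = (\<sigma> b @ [l]) ! length p"
  proof -
    note r = ext_Y_elim[where X=X and s=s and p=p and v=v and c'=c' and d'=d']
    have "\<exists>a b. a \<in> A \<and> b \<in> A \<and> a # v @ [b] \<in> lang X \<and> strict_suffix s (\<sigma> a) \<and> prefix p (\<sigma> b)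
           \<and> c' = rev (\<sigma> a) ! length s \<and> d' = (\<sigma> b @ [l]) ! length p"
      by (rule r) (use XA s_nol[OF a0] b0(3) pp vA cd(2) in auto)
    then show ?thesis using that by blast
  qed
  then show "cd \<in> {(rev (\<sigma> a) ! length s, (\<sigma> b @ [l]) ! length p) | a b. (a, b) \<in> Ext X v \<and> strict_suffix s (\<sigma> a) \<and> prefix p (\<sigma> b)}"
    using cd(1) unfolding Ext_def by blast
next
  fix cd assume "cd \<in> {(rev (\<sigma> a) ! length s, (\<sigma> b @ [l]) ! length p) | a b. (a, b) \<in> Ext X v \<and> strict_suffix s (\<sigma> a) \<and> prefix p (\<sigma> b)}"
  then obtain a b where ab: "cd = (rev (\<sigma> a) ! length s, (\<sigma> b @ [l]) ! length p)" "a # v @ [b] \<in> lang X"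
    "strict_suffix s (\<sigma> a)" "prefix p (\<sigma> b)" unfolding Ext_def by blast
  have "(rev (\<sigma> a) ! length s) # s @ morph \<sigma> v @ p @ [(\<sigma> b @ [l]) ! length p] \<in> lang (shift_image \<sigma> X)"
    by (rule ext_Y_intro[where X=X]) (use XA ab(2-4) in auto)
  then show "cd \<in> Ext (shift_image \<sigma> X) (s @ morph \<sigma> v @ p)" using ab(1) unfolding Ext_def by simp
qed

end



lemma pathA_tree:
  assumes "distinct [x1, x2, x3]" "distinct [y1, y2]"
  shows "is_tree (Inl ` {x1, x2, x3} \<union> Inr ` {y1, y2})
    (\<lambda>u v. \<exists>a b. (a, b) \<in> {(x1, y1), (x2, y1), (x2, y2), (x3, y2)} \<and> (u = Inl a \<and> v = Inr b \<or> u = Inr b \<and> v = Inl a))"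
proof -
  have V: "Inl ` {x1, x2, x3} \<union> Inr ` {y1, y2} = {Inl x1, Inr y1, Inl x2, Inr y2, Inl x3}" by auto
  have T: "is_tree {Inl x1, Inr y1, Inl x2, Inr y2, Inl x3}
    (\<lambda>u v. \<exists>a b. (a, b) \<in> {(x1, y1), (x2, y1), (x2, y2), (x3, y2)} \<and> (u = Inl a \<and> v = Inr b \<or> u = Inr b \<and> v = Inl a))"
    by (rule path5_tree) (use assms in auto)
  show ?thesis unfolding V by (rule T)
qed

lemma pathB_tree:
  assumes "distinct [x1, x2]" "distinct [y1, y2, y3]"
  shows "is_tree (Inl ` {x1, x2} \<union> Inr ` {y1, y2, y3})
    (\<lambda>u v. \<exists>a b. (a, b) \<in> {(x1, y1), (x1, y2), (x2, y2), (x2, y3)} \<and> (u = Inl a \<and> v = Inr b \<or> u = Inr b \<and> v = Inl a))"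
proof -
  have V: "Inl ` {x1, x2} \<union> Inr ` {y1, y2, y3} = {Inr y1, Inl x1, Inr y2, Inl x2, Inr y3}" by auto
  have T: "is_tree {Inr y1, Inl x1, Inr y2, Inl x2, Inr y3}
    (\<lambda>u v. \<exists>a b. (a, b) \<in> {(x1, y1), (x1, y2), (x2, y2), (x2, y3)} \<and> (u = Inl a \<and> v = Inr b \<or> u = Inr b \<and> v = Inl a))"
    by (rule path5_tree) (use assms in auto)
  show ?thesis unfolding V by (rule T)
qed



lemma card_ge2_obtain:
  assumes "card S \<ge> 2" obtains x y where "x \<in> S" "y \<in> S" "x \<noteq> y"
proof -
  have fin: "finite S" using assms by (metis card.infinite not_numeral_le_zero)
  have "\<not> (\<forall>a1\<in>S. \<forall>a2\<in>S. a1 = a2)"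
    using card_le_Suc0_iff_eq[OF fin] assms by auto
  then show ?thesis using that by blast
qed

context slp
begin

lemma trie_f: "trie A (\<lambda>a. rev (\<sigma> a))"
proof
  fix a1 a2 assume a: "a1 \<in> A" "a2 \<in> A" "a1 \<noteq> a2"
  show "\<not> prefix (rev (\<sigma> a1)) (rev (\<sigma> a2))"
  proof
    assume "prefix (rev (\<sigma> a1)) (rev (\<sigma> a2))"
    then have "suffix (\<sigma> a1) (\<sigma> a2)" by (simp add: suffix_to_prefix)
    then obtain r where r: "\<sigma> a2 = r @ \<sigma> a1" by (auto simp: suffix_def)
    show False
    proof (cases "r = []")
      case True
      then have "\<sigma> a1 = \<sigma> a2" using r by simp
      then show False using inj a by (meson inj_onD)
    next
      case False
      have "\<sigma> a2 ! length r = l" using r nth0_l[OF a(1)] ne[OF a(1)] by (simp add: nth_append)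
      moreover have "length r < length (\<sigma> a2)" using r ne[OF a(1)] by simp
      ultimately have "length r = 0" using marked[OF a(2)] by blast
      then show False using False by simp
    qed
  qed
qed

lemma trie_g: "trie A (\<lambda>a. \<sigma> a @ [l])"
proof
  fix a1 a2 assume a: "a1 \<in> A" "a2 \<in> A" "a1 \<noteq> a2"
  show "\<not> prefix (\<sigma> a1 @ [l]) (\<sigma> a2 @ [l])"
  proof
    assume pr: "prefix (\<sigma> a1 @ [l]) (\<sigma> a2 @ [l])"
    then have le: "length (\<sigma> a1) \<le> length (\<sigma> a2)" using prefix_length_le by fastforce
    show False
    proof (cases "length (\<sigma> a1) < length (\<sigma> a2)")
      case True
      have "(\<sigma> a2 @ [l]) ! length (\<sigma> a1) = (\<sigma> a1 @ [l]) ! length (\<sigma> a1)"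
        using pr by (rule prefix_nth') simp
      then have "\<sigma> a2 ! length (\<sigma> a1) = l" using True by (simp add: nth_append)
      then have "length (\<sigma> a1) = 0" using marked[OF a(2) True] by simp
      then show False using ne[OF a(1)] by simp
    next
      case False
      then have "length (\<sigma> a1 @ [l]) = length (\<sigma> a2 @ [l])" using le by simp
      then have "\<sigma> a1 @ [l] = \<sigma> a2 @ [l]" using pr by (auto simp: prefix_def)
      then show False using inj a by (meson inj_onD append1_eq_conv)
    qed
  qed
qed

lemma lcp_g:
  assumes "b1 \<in> A" "b2 \<in> A" "b1 \<noteq> b2"
  shows "longest_common_prefix (\<sigma> b1) (\<sigma> b2) = longest_common_prefix (\<sigma> b1 @ [l]) (\<sigma> b2 @ [l])"
proof (rule prefix_order.antisym)
  show "prefix (longest_common_prefix (\<sigma> b1) (\<sigma> b2)) (longest_common_prefix (\<sigma> b1 @ [l]) (\<sigma> b2 @ [l]))"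
    by (rule longest_common_prefix_max_prefix)
      (meson longest_common_prefix_prefix1 longest_common_prefix_prefix2 prefix_order.trans prefixI)+
next
  interpret tg: trie A "\<lambda>a. \<sigma> a @ [l]" by (rule trie_g)
  show "prefix (longest_common_prefix (\<sigma> b1 @ [l]) (\<sigma> b2 @ [l])) (longest_common_prefix (\<sigma> b1) (\<sigma> b2))"
  proof (rule longest_common_prefix_max_prefix)
    have "strict_prefix (longest_common_prefix (\<sigma> b1 @ [l]) (\<sigma> b2 @ [l])) (\<sigma> b1 @ [l])"
      using tg.lcp_strict1[OF assms] by simp
    then show "prefix (longest_common_prefix (\<sigma> b1 @ [l]) (\<sigma> b2 @ [l])) (\<sigma> b1)" by (rule strict_prefix_snoc)
    have "strict_prefix (longest_common_prefix (\<sigma> b1 @ [l]) (\<sigma> b2 @ [l])) (\<sigma> b2 @ [l])"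
      using tg.lcp_strict2[OF assms] by simp
    then show "prefix (longest_common_prefix (\<sigma> b1 @ [l]) (\<sigma> b2 @ [l])) (\<sigma> b2)" by (rule strict_prefix_snoc)
  qed
qed

lemma counter_build:
  assumes fin: "finite A" and cA: "card A \<ge> 2" and PA: "P \<subseteq> A \<times> A" and Pne: "P \<noteq> {}"
    and L: "fst ` P = L" and R: "snd ` P = R" and cL: "card L \<ge> 2" and cR: "card R \<ge> 2"
    and T: "is_tree (Inl ` L \<union> Inr ` R) (\<lambda>u v. \<exists>a b. (a, b) \<in> P \<and> (u = Inl a \<and> v = Inr b \<or> u = Inr b \<and> v = Inl a))"
    and sP: "\<And>a b. (a, b) \<in> P \<Longrightarrow> strict_suffix s (\<sigma> a)"
    and pP: "\<And>a b. (a, b) \<in> P \<Longrightarrow> prefix p (\<sigma> b)" and pne: "p \<noteq> []"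
    and cd: "C1 \<noteq> C2" "D1 \<noteq> D2"
      "(C1, D1) \<in> (\<lambda>(a, b). (rev (\<sigma> a) ! length s, (\<sigma> b @ [l]) ! length p)) ` P"
      "(C2, D1) \<in> (\<lambda>(a, b). (rev (\<sigma> a) ! length s, (\<sigma> b @ [l]) ! length p)) ` P"
      "(C2, D2) \<in> (\<lambda>(a, b). (rev (\<sigma> a) ! length s, (\<sigma> b @ [l]) ! length p)) ` P"
      "(C1, D2) \<in> (\<lambda>(a, b). (rev (\<sigma> a) ! length s, (\<sigma> b @ [l]) ! length p)) ` P"
  shows "\<exists>X. shift_space A X \<and> \<not> (\<forall>v\<in>lang X. bispecial X v \<and> dendric X v \<longrightarrow> dendric_preserving \<sigma> l X v)"
proof -
  obtain X v where X: "shift_space A X" "v \<in> lists A" "v \<in> lang X" "Ext X v = P"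
    using construct[OF fin cA PA Pne] by blast
  have XA: "\<And>x i. x \<in> X \<Longrightarrow> x i \<in> A" using X(1) unfolding shift_space_def by (auto simp: Pi_iff)
  have Em: "Eminus X v = L" using X(4) L by (simp add: Eminus_Ext)
  have Ep: "Eplus X v = R" using X(4) R by (simp add: Eplus_Ext)
  have bis: "bispecial X v" using Em Ep cL cR X(3) by (simp add: bispecial_def)
  have den: "dendric X v" using X(3) T Em Ep X(4) unfolding dendric_def ext_graph_vertices_def ext_graph_adj_def by simp
  obtain a0 b0 where ab0: "(a0, b0) \<in> P" using Pne by auto
  have a0A: "a0 \<in> A" and b0A: "b0 \<in> A" using ab0 PA by auto
  define Y where "Y = shift_image \<sigma> X"
  define u where "u = s @ morph \<sigma> v @ p"
  have EY: "Ext Y u = (\<lambda>(a, b). (rev (\<sigma> a) ! length s, (\<sigma> b @ [l]) ! length p)) ` P"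
  proof -
    have "Ext Y u = {(rev (\<sigma> a) ! length s, (\<sigma> b @ [l]) ! length p) | a b. (a, b) \<in> Ext X v \<and> strict_suffix s (\<sigma> a) \<and> prefix p (\<sigma> b)}"
      unfolding Y_def u_def by (rule Ext_Y_char[where X=X, OF _ a0A sP[OF ab0] b0A pP[OF ab0] pne X(2)]) (use XA in blast)
    then show ?thesis using X(4) sP pP by (auto; blast)
  qed
  have "(rev (\<sigma> a0) ! length s) # s @ morph \<sigma> v @ p @ [(\<sigma> b0 @ [l]) ! length p] \<in> lang Y"
    unfolding Y_def by (rule ext_Y_intro[where X=X]) (use XA X(4) ab0 sP pP in \<open>auto simp: Ext_def\<close>)
  then have uY: "u \<in> lang Y" unfolding u_def by (metis append.assoc lang_mid)
  have finE: "finite (Ext Y u)" using EY PA fin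
    by (metis finite_SigmaI finite_imageI finite_subset)
  have nd: "bispecial Y u \<and> \<not> dendric Y u"
    by (rule nondendric4[OF _ _ _ _ cd(1,2) finE uY]) (use EY cd in auto)
  have hp: "hd p = l" using p_props[OF b0A pP[OF ab0] pne] by simp
  have "extended_image \<sigma> l X u v"
    unfolding extended_image_def
  proof (intro conjI)
    show "u \<in> lang (shift_image \<sigma> X)" using uY Y_def by simp
    show "u \<noteq> []" using pne u_def by simp
    show "l \<in> set u" using pne hp u_def by (cases p) auto
    show "v \<in> lang X" by (rule X(3))
    show "\<exists>s' p' a b. (a, b) \<in> Ext X v \<and> strict_suffix s' (\<sigma> a) \<and> p' \<noteq> [] \<and> prefix p' (\<sigma> b) \<and> u = s' @ morph \<sigma> v @ p'"
      using ab0 X(4) sP pP pne u_def by blast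
  qed
  then have "\<not> dendric_preserving \<sigma> l X v" using nd unfolding dendric_preserving_def Y_def by blast
  then show ?thesis using X(1,3) bis den by blast
qed

end



context slp
begin

lemma lcp_g_ne: "b1 \<in> A \<Longrightarrow> b2 \<in> A \<Longrightarrow> longest_common_prefix (\<sigma> b1 @ [l]) (\<sigma> b2 @ [l]) \<noteq> []"
proof -
  assume b: "b1 \<in> A" "b2 \<in> A"
  obtain r1 where r1: "\<sigma> b1 = l # r1" using ne[OF b(1)] hd_l[OF b(1)] by (cases "\<sigma> b1") auto
  obtain r2 where r2: "\<sigma> b2 = l # r2" using ne[OF b(2)] hd_l[OF b(2)] by (cases "\<sigma> b2") auto
  show ?thesis using r1 r2 by simp
qed

end

theorem corollary4p7:
  fixes A :: "'a set" and B :: "'b set" and \<sigma> :: "'a \<Rightarrow> 'b list" and l :: 'b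
  assumes "finite A" and "card A \<ge> 2" and "finite B"
    and "is_morphism A B \<sigma>"
    and "injective_morphism A \<sigma>"
    and "strongly_left_proper A \<sigma> l"
  shows "(card (Tminus A \<sigma>) = 1 \<and> card (Tplus A \<sigma>) = 1) \<longleftrightarrow>
         (\<forall>X. shift_space A X \<longrightarrow>
            (\<forall>v\<in>lang X. bispecial X v \<and> dendric X v \<longrightarrow> dendric_preserving \<sigma> l X v))"
proof -
  have inj: "inj_on \<sigma> A"
  proof (rule inj_onI)
    fix a a' assume a: "a \<in> A" "a' \<in> A" "\<sigma> a = \<sigma> a'"
    then have "morph \<sigma> [a] = morph \<sigma> [a']" by simp
    moreover have "[a] \<in> lists A" "[a'] \<in> lists A" using a by auto
    ultimately have "[a] = [a']" using assms(5) unfolding injective_morphism_def by (meson inj_onD)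
    then show "a = a'" by simp
  qed
  interpret slp A \<sigma> l using assms(6) inj by unfold_locales
  define f where "f = (\<lambda>a. rev (\<sigma> a))"
  define g where "g = (\<lambda>a. \<sigma> a @ [l])"
  interpret tf: trie A f unfolding f_def by (rule trie_f)
  interpret tg: trie A g unfolding g_def by (rule trie_g)
  have Tm: "Tminus A \<sigma> = rev ` Tset A f"
    unfolding Tminus_def Tset_def f_def longest_common_suffix_def by blast
  have cTm: "card (Tminus A \<sigma>) = card (Tset A f)" unfolding Tm
    by (rule card_image) (simp add: inj_on_def)
  have Tp: "Tplus A \<sigma> = Tset A g"
  proof (intro set_eqI iffI)
    fix t assume "t \<in> Tplus A \<sigma>"
    then obtain b1 b2 where b: "b1 \<in> A" "b2 \<in> A" "b1 \<noteq> b2" "t = longest_common_prefix (\<sigma> b1) (\<sigma> b2)"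
      unfolding Tplus_def by blast
    then have "t = longest_common_prefix (g b1) (g b2)" using lcp_g[OF b(1-3)] g_def by simp
    then show "t \<in> Tset A g" using b unfolding Tset_def by blast
  next
    fix t assume "t \<in> Tset A g"
    then obtain b1 b2 where b: "b1 \<in> A" "b2 \<in> A" "b1 \<noteq> b2" "t = longest_common_prefix (g b1) (g b2)"
      unfolding Tset_def by blast
    then have "t = longest_common_prefix (\<sigma> b1) (\<sigma> b2)" using lcp_g[OF b(1-3)] g_def by simp
    then show "t \<in> Tplus A \<sigma>" using b unfolding Tplus_def by blast
  qed
  have ssf: "strict_suffix s (\<sigma> a) \<longleftrightarrow> strict_prefix (rev s) (f a)" for s a
    unfolding f_def by (simp add: strict_suffix_to_prefix)
  show ?thesis
  proof
    assume H1: "card (Tminus A \<sigma>) = 1 \<and> card (Tplus A \<sigma>) = 1"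
    have cf: "card (Tset A f) = 1" using H1 cTm by simp
    have cg: "card (Tset A g) = 1" using H1 Tp by simp
    show "\<forall>X. shift_space A X \<longrightarrow> (\<forall>v\<in>lang X. bispecial X v \<and> dendric X v \<longrightarrow> dendric_preserving \<sigma> l X v)"
    proof (intro allI impI ballI)
      fix X v assume ss: "shift_space A X" and vX: "v \<in> lang X" and bd: "bispecial X v \<and> dendric X v"
      have XA0: "X \<subseteq> UNIV \<rightarrow> A" using ss unfolding shift_space_def by blast
      have XA: "\<And>x i. x \<in> X \<Longrightarrow> x i \<in> A" using XA0 by (auto simp: Pi_iff)
      have vA: "v \<in> lists A" using lang_lists[OF XA0 vX] .
      have ExtA: "\<And>a b. (a, b) \<in> Ext X v \<Longrightarrow> a \<in> A \<and> b \<in> A"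
      proof -
        fix a b assume "(a, b) \<in> Ext X v"
        then have "a # v @ [b] \<in> lists A" using lang_lists[OF XA0] unfolding Ext_def by blast
        then show "a \<in> A \<and> b \<in> A" by simp
      qed
      show "dendric_preserving \<sigma> l X v" unfolding dendric_preserving_def
      proof (intro allI impI)
        fix u assume H: "extended_image \<sigma> l X u v \<and> bispecial (shift_image \<sigma> X) u"
        define Y where "Y = shift_image \<sigma> X"
        from H obtain s p a0 b0 where uY: "u \<in> lang Y" and e0: "(a0, b0) \<in> Ext X v"
          and s0: "strict_suffix s (\<sigma> a0)" and pne: "p \<noteq> []" and p0: "prefix p (\<sigma> b0)"
          and u: "u = s @ morph \<sigma> v @ p"
          unfolding extended_image_def Y_def by blast
        have a0A: "a0 \<in> A" and b0A: "b0 \<in> A" using ExtA[OF e0] by auto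
        define c where "c = (\<lambda>a. rev (\<sigma> a) ! length s)"
        define d where "d = (\<lambda>b. (\<sigma> b @ [l]) ! length p)"
        have EY: "Ext Y u = {(c a, d b) | a b. (a, b) \<in> Ext X v \<and> strict_suffix s (\<sigma> a) \<and> prefix p (\<sigma> b)}"
          unfolding u Y_def c_def d_def
          by (rule Ext_Y_char[where X=X, OF _ a0A s0 b0A p0 pne vA]) (use XA in blast)
        have bY: "bispecial Y u" using H Y_def by simp
        have EmA: "\<exists>a. a \<in> A \<and> strict_suffix s (\<sigma> a) \<and> C = c a" if "C \<in> Eminus Y u" for C
        proof -
          have "C \<in> fst ` Ext Y u" using that by (simp only: Eminus_Ext)
          then obtain x where x: "x \<in> Ext Y u" "C = fst x" by blast
          obtain D where "(C, D) \<in> Ext Y u" using x by (cases x) simp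
          then obtain a b where "(a, b) \<in> Ext X v" "strict_suffix s (\<sigma> a)" "C = c a" unfolding EY by blast
          then show ?thesis using ExtA by blast
        qed
        have EpA: "\<exists>b. b \<in> A \<and> prefix p (\<sigma> b) \<and> D = d b" if "D \<in> Eplus Y u" for D
        proof -
          have "D \<in> snd ` Ext Y u" using that by (simp only: Eplus_Ext)
          then obtain x where x: "x \<in> Ext Y u" "D = snd x" by blast
          obtain C where "(C, D) \<in> Ext Y u" using x by (cases x) simp
          then obtain a b where "(a, b) \<in> Ext X v" "prefix p (\<sigma> b)" "D = d b" unfolding EY by blast
          then show ?thesis using ExtA by blast
        qed
        obtain C1 C2 where C: "C1 \<in> Eminus Y u" "C2 \<in> Eminus Y u" "C1 \<noteq> C2"
          using bY unfolding bispecial_def by (meson card_ge2_obtain)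
        obtain a1 where a1: "a1 \<in> A" "strict_suffix s (\<sigma> a1)" "C1 = c a1" using EmA[OF C(1)] by blast
        obtain a2 where a2: "a2 \<in> A" "strict_suffix s (\<sigma> a2)" "C2 = c a2" using EmA[OF C(2)] by blast
        obtain D1 D2 where D: "D1 \<in> Eplus Y u" "D2 \<in> Eplus Y u" "D1 \<noteq> D2"
          using bY unfolding bispecial_def by (meson card_ge2_obtain)
        obtain b1 where b1: "b1 \<in> A" "prefix p (\<sigma> b1)" "D1 = d b1" using EpA[OF D(1)] by blast
        obtain b2 where b2: "b2 \<in> A" "prefix p (\<sigma> b2)" "D2 = d b2" using EpA[OF D(2)] by blast
        have cf_eq: "(\<lambda>a. f a ! length (rev s)) = c" by (simp add: fun_eq_iff f_def c_def)
        have dg_eq: "(\<lambda>b. g b ! length p) = d" by (simp add: fun_eq_iff g_def d_def)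
        have L: "(\<forall>a\<in>A. strict_prefix (rev s) (f a)) \<and> inj_on (\<lambda>a. f a ! length (rev s)) A"
          by (rule tf.G1[OF cf a1(1) a2(1)]) (use a1 a2 C(3) ssf cf_eq in auto)
        have allS: "\<forall>a\<in>A. strict_suffix s (\<sigma> a)" using L ssf by blast
        have injc: "inj_on c A" using L cf_eq by simp
        have R: "(\<forall>b\<in>A. strict_prefix p (g b)) \<and> inj_on (\<lambda>b. g b ! length p) A"
          by (rule tg.G1[OF cg b1(1) b2(1)]) (use b1 b2 D(3) dg_eq g_def prefix_strict_snoc in auto)
        have allP: "\<forall>b\<in>A. prefix p (\<sigma> b)"
        proof
          fix b assume "b \<in> A"
          then have "strict_prefix p (\<sigma> b @ [l])" using R by (simp add: g_def)
          then show "prefix p (\<sigma> b)" by (rule strict_prefix_snoc)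
        qed
        have injd: "inj_on d A" using R dg_eq by simp
        have EY': "Ext Y u = (\<lambda>(a, b). (c a, d b)) ` Ext X v"
        proof -
          have "Ext Y u = {(c a, d b) | a b. (a, b) \<in> Ext X v}" unfolding EY using allS allP ExtA by blast
          also have "\<dots> = (\<lambda>(a, b). (c a, d b)) ` Ext X v" by (auto simp: image_def; force)
          finally show ?thesis .
        qed
        have key: "(c a, d b) \<in> Ext Y u \<longleftrightarrow> (a, b) \<in> Ext X v" if ab: "a \<in> A" "b \<in> A" for a b
        proof
          assume "(c a, d b) \<in> Ext Y u"
          then obtain a' b' where "(a', b') \<in> Ext X v" "c a = c a'" "d b = d b'" using EY' by auto
          moreover have "a' \<in> A" "b' \<in> A" using ExtA calculation(1) by auto
          ultimately show "(a, b) \<in> Ext X v" using injc injd ab by (metis inj_onD)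
        qed (use EY' in auto)
        have EmY: "Eminus Y u = c ` Eminus X v" unfolding Eminus_Ext EY' by (simp add: image_image case_prod_beta)
        have EpY: "Eplus Y u = d ` Eplus X v" unfolding Eplus_Ext EY' by (simp add: image_image case_prod_beta)
        define V where "V = ext_graph_vertices X v"
        have VA1: "a \<in> A" if "Inl a \<in> V" for a
        proof -
          have "a \<in> fst ` Ext X v" using that unfolding V_def ext_graph_vertices_def Eminus_Ext by auto
          then show ?thesis using ExtA by auto
        qed
        have VA2: "b \<in> A" if "Inr b \<in> V" for b
        proof -
          have "b \<in> snd ` Ext X v" using that unfolding V_def ext_graph_vertices_def Eplus_Ext by auto
          then show ?thesis using ExtA by auto
        qed
        note VA = VA1 VA2
        have V': "ext_graph_vertices Y u = map_sum c d ` V"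
          unfolding V_def ext_graph_vertices_def EmY EpY by (simp add: image_Un image_image)
        have injF: "inj_on (map_sum c d) V"
        proof (rule inj_onI)
          fix x y assume xy: "x \<in> V" "y \<in> V" "map_sum c d x = map_sum c d y"
          show "x = y"
          proof (cases x)
            case (Inl a)
            then show ?thesis using xy VA injc by (cases y) (auto dest: inj_onD)
          next
            case (Inr b)
            then show ?thesis using xy VA injd by (cases y) (auto dest: inj_onD)
          qed
        qed
        have adj: "ext_graph_adj Y u (map_sum c d p') (map_sum c d q') \<longleftrightarrow> ext_graph_adj X v p' q'"
          if pq: "p' \<in> V" "q' \<in> V" for p' q'
        proof (cases p')
          case (Inl a)
          then show ?thesis using pq VA key by (cases q') (auto simp: adj_simps)
        next
          case (Inr b)
          then show ?thesis using pq VA key by (cases q') (auto simp: adj_simps)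
        qed
        have "is_tree V (ext_graph_adj X v)" using bd unfolding dendric_def V_def by blast
        then have "is_tree (map_sum c d ` V) (ext_graph_adj Y u)"
          using tree_iso[of "map_sum c d" V "ext_graph_adj Y u" "ext_graph_adj X v"] injF adj by blast
        then show "dendric (shift_image \<sigma> X) u" using uY V' unfolding dendric_def Y_def by simp
      qed
    qed
  next
    assume H2: "\<forall>X. shift_space A X \<longrightarrow> (\<forall>v\<in>lang X. bispecial X v \<and> dendric X v \<longrightarrow> dendric_preserving \<sigma> l X v)"
    show "card (Tminus A \<sigma>) = 1 \<and> card (Tplus A \<sigma>) = 1"
    proof (rule ccontr)
      assume "\<not> ?thesis"
      then have TT: "card (Tset A f) \<noteq> 1 \<or> card (Tset A g) \<noteq> 1" using cTm Tp by auto
      have "\<exists>X. shift_space A X \<and> \<not> (\<forall>v\<in>lang X. bispecial X v \<and> dendric X v \<longrightarrow> dendric_preserving \<sigma> l X v)"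
      proof (cases "card (Tset A f) \<noteq> 1")
        case True
        obtain q a1 a2 a3 where Gc: "q \<in> Tset A f \<and> a1 \<in> A \<and> a2 \<in> A \<and> a3 \<in> A \<and> a1 \<noteq> a2 \<and>
          strict_prefix q (f a1) \<and> strict_prefix q (f a2) \<and> strict_prefix q (f a3) \<and>
          f a1 ! length q = f a2 ! length q \<and> f a1 ! length q \<noteq> f a3 ! length q"
          using tf.G2[OF assms(1) assms(2) True] by blast
        have G: "q \<in> Tset A f" "a1 \<in> A" "a2 \<in> A" "a3 \<in> A" "a1 \<noteq> a2"
          "strict_prefix q (f a1)" "strict_prefix q (f a2)" "strict_prefix q (f a3)"
          "f a1 ! length q = f a2 ! length q" "f a1 ! length q \<noteq> f a3 ! length q"
          using Gc by auto
        obtain b1 b2 where b: "b1 \<in> A" "b2 \<in> A" "b1 \<noteq> b2" using assms(2) by (meson card_ge2_obtain)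
        define p where "p = longest_common_prefix (g b1) (g b2)"
        have sp1: "strict_prefix p (g b1)" unfolding p_def by (rule tg.lcp_strict1[OF b])
        have sp2: "strict_prefix p (g b2)" unfolding p_def by (rule tg.lcp_strict2[OF b])
        have dne: "g b1 ! length p \<noteq> g b2 ! length p" unfolding p_def by (rule tg.G3[OF b])
        have pne: "p \<noteq> []" unfolding p_def g_def by (rule lcp_g_ne[OF b(1,2)])
        have pb1: "prefix p (\<sigma> b1)" using sp1 unfolding g_def by (rule strict_prefix_snoc)
        have pb2: "prefix p (\<sigma> b2)" using sp2 unfolding g_def by (rule strict_prefix_snoc)
        define s where "s = rev q"
        have sa1: "strict_suffix s (\<sigma> a1)" using G(6) ssf s_def by simp
        have sa2: "strict_suffix s (\<sigma> a2)" using G(7) ssf s_def by simp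
        have sa3: "strict_suffix s (\<sigma> a3)" using G(8) ssf s_def by simp
        have c_eq: "rev (\<sigma> a) ! length s = f a ! length q" for a by (simp add: s_def f_def)
        have d_eq: "(\<sigma> b @ [l]) ! length p = g b ! length p" for b by (simp add: g_def)
        have a13: "a1 \<noteq> a3" and a23: "a2 \<noteq> a3" using G(9,10) by auto
        define P where "P = {(a1, b1), (a3, b1), (a3, b2), (a2, b2)}"
        let ?h = "\<lambda>(a, b). (rev (\<sigma> a) ! length s, (\<sigma> b @ [l]) ! length p)"
        have PA: "P \<subseteq> A \<times> A" using G b unfolding P_def by auto
        have Pne: "P \<noteq> {}" unfolding P_def by simp
        have L: "fst ` P = {a1, a3, a2}" unfolding P_def by auto
        have R: "snd ` P = {b1, b2}" unfolding P_def by auto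
        have cL: "card {a1, a3, a2} \<ge> 2" using G(5) a13 a23 by simp
        have cR: "card {b1, b2} \<ge> 2" using b(3) by simp
        have T: "is_tree (Inl ` {a1, a3, a2} \<union> Inr ` {b1, b2})
          (\<lambda>u v. \<exists>a b. (a, b) \<in> P \<and> (u = Inl a \<and> v = Inr b \<or> u = Inr b \<and> v = Inl a))"
          unfolding P_def by (rule pathA_tree) (use G(5) a13 a23 b(3) in auto)
        have sP: "\<And>a b. (a, b) \<in> P \<Longrightarrow> strict_suffix s (\<sigma> a)" using sa1 sa2 sa3 unfolding P_def by auto
        have pP: "\<And>a b. (a, b) \<in> P \<Longrightarrow> prefix p (\<sigma> b)" using pb1 pb2 unfolding P_def by auto
        have m1: "(rev (\<sigma> a1) ! length s, (\<sigma> b1 @ [l]) ! length p) \<in> ?h ` P"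
          by (rule image_eqI[where x="(a1, b1)"]) (simp_all add: P_def)
        have m2: "(rev (\<sigma> a3) ! length s, (\<sigma> b1 @ [l]) ! length p) \<in> ?h ` P"
          by (rule image_eqI[where x="(a3, b1)"]) (simp_all add: P_def)
        have m3: "(rev (\<sigma> a3) ! length s, (\<sigma> b2 @ [l]) ! length p) \<in> ?h ` P"
          by (rule image_eqI[where x="(a3, b2)"]) (simp_all add: P_def)
        have m4: "(rev (\<sigma> a1) ! length s, (\<sigma> b2 @ [l]) ! length p) \<in> ?h ` P"
          by (rule image_eqI[where x="(a2, b2)"]) (use G(9) c_eq in \<open>simp_all add: P_def\<close>)
        have n1: "rev (\<sigma> a1) ! length s \<noteq> rev (\<sigma> a3) ! length s" using G(10) c_eq by simp
        have n2: "(\<sigma> b1 @ [l]) ! length p \<noteq> (\<sigma> b2 @ [l]) ! length p" using dne d_eq by simp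
        show ?thesis by (rule counter_build[OF assms(1,2) PA Pne L R cL cR T sP pP pne n1 n2 m1 m2 m3 m4])
      next
        case False
        then have Tg: "card (Tset A g) \<noteq> 1" using TT by simp
        obtain p b1 b2 b3 where Gc: "p \<in> Tset A g \<and> b1 \<in> A \<and> b2 \<in> A \<and> b3 \<in> A \<and> b1 \<noteq> b2 \<and>
          strict_prefix p (g b1) \<and> strict_prefix p (g b2) \<and> strict_prefix p (g b3) \<and>
          g b1 ! length p = g b2 ! length p \<and> g b1 ! length p \<noteq> g b3 ! length p"
          using tg.G2[OF assms(1) assms(2) Tg] by blast
        have G: "p \<in> Tset A g" "b1 \<in> A" "b2 \<in> A" "b3 \<in> A" "b1 \<noteq> b2"
          "strict_prefix p (g b1)" "strict_prefix p (g b2)" "strict_prefix p (g b3)"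
          "g b1 ! length p = g b2 ! length p" "g b1 ! length p \<noteq> g b3 ! length p"
          using Gc by auto
        obtain a1 a2 where a: "a1 \<in> A" "a2 \<in> A" "a1 \<noteq> a2" using assms(2) by (meson card_ge2_obtain)
        define q where "q = longest_common_prefix (f a1) (f a2)"
        have sq1: "strict_prefix q (f a1)" unfolding q_def by (rule tf.lcp_strict1[OF a])
        have sq2: "strict_prefix q (f a2)" unfolding q_def by (rule tf.lcp_strict2[OF a])
        have cne: "f a1 ! length q \<noteq> f a2 ! length q" unfolding q_def by (rule tf.G3[OF a])
        have pne: "p \<noteq> []"
        proof -
          obtain x y where xy: "x \<in> A" "y \<in> A" "p = longest_common_prefix (g x) (g y)"
            using G(1) unfolding Tset_def by blast
          show ?thesis using lcp_g_ne[OF xy(1,2)] xy(3) by (simp add: g_def)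
        qed
        have pb1: "prefix p (\<sigma> b1)" using G(6) unfolding g_def by (rule strict_prefix_snoc)
        have pb2: "prefix p (\<sigma> b2)" using G(7) unfolding g_def by (rule strict_prefix_snoc)
        have pb3: "prefix p (\<sigma> b3)" using G(8) unfolding g_def by (rule strict_prefix_snoc)
        define s where "s = rev q"
        have sa1: "strict_suffix s (\<sigma> a1)" using sq1 ssf s_def by simp
        have sa2: "strict_suffix s (\<sigma> a2)" using sq2 ssf s_def by simp
        have c_eq: "rev (\<sigma> a) ! length s = f a ! length q" for a by (simp add: s_def f_def)
        have d_eq: "(\<sigma> b @ [l]) ! length p = g b ! length p" for b by (simp add: g_def)
        have b13: "b1 \<noteq> b3" and b23: "b2 \<noteq> b3" using G(9,10) by auto
        define P where "P = {(a1, b1), (a1, b3), (a2, b3), (a2, b2)}"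
        let ?h = "\<lambda>(a, b). (rev (\<sigma> a) ! length s, (\<sigma> b @ [l]) ! length p)"
        have PA: "P \<subseteq> A \<times> A" using G a unfolding P_def by auto
        have Pne: "P \<noteq> {}" unfolding P_def by simp
        have L: "fst ` P = {a1, a2}" unfolding P_def by auto
        have R: "snd ` P = {b1, b3, b2}" unfolding P_def by auto
        have cL: "card {a1, a2} \<ge> 2" using a(3) by simp
        have cR: "card {b1, b3, b2} \<ge> 2" using G(5) b13 b23 by simp
        have T: "is_tree (Inl ` {a1, a2} \<union> Inr ` {b1, b3, b2})
          (\<lambda>u v. \<exists>a b. (a, b) \<in> P \<and> (u = Inl a \<and> v = Inr b \<or> u = Inr b \<and> v = Inl a))"
          unfolding P_def by (rule pathB_tree) (use G(5) b13 b23 a(3) in auto)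
        have sP: "\<And>a b. (a, b) \<in> P \<Longrightarrow> strict_suffix s (\<sigma> a)" using sa1 sa2 unfolding P_def by auto
        have pP: "\<And>a b. (a, b) \<in> P \<Longrightarrow> prefix p (\<sigma> b)" using pb1 pb2 pb3 unfolding P_def by auto
        have m1: "(rev (\<sigma> a1) ! length s, (\<sigma> b1 @ [l]) ! length p) \<in> ?h ` P"
          by (rule image_eqI[where x="(a1, b1)"]) (simp_all add: P_def)
        have m2: "(rev (\<sigma> a2) ! length s, (\<sigma> b1 @ [l]) ! length p) \<in> ?h ` P"
          by (rule image_eqI[where x="(a2, b2)"]) (use G(9) d_eq in \<open>simp_all add: P_def\<close>)
        have m3: "(rev (\<sigma> a2) ! length s, (\<sigma> b3 @ [l]) ! length p) \<in> ?h ` P"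
          by (rule image_eqI[where x="(a2, b3)"]) (simp_all add: P_def)
        have m4: "(rev (\<sigma> a1) ! length s, (\<sigma> b3 @ [l]) ! length p) \<in> ?h ` P"
          by (rule image_eqI[where x="(a1, b3)"]) (simp_all add: P_def)
        have n1: "rev (\<sigma> a1) ! length s \<noteq> rev (\<sigma> a2) ! length s" using cne c_eq by simp
        have n2: "(\<sigma> b1 @ [l]) ! length p \<noteq> (\<sigma> b3 @ [l]) ! length p" using G(10) d_eq by simp
        show ?thesis by (rule counter_build[OF assms(1,2) PA Pne L R cL cR T sP pP pne n1 n2 m1 m2 m3 m4])
      qed
      then show False using H2 by blast
    qed
  qed
qed



end
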